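(* Let $(\mathfrak H_{-,+},\mathfrak H,G,W)$ be a reduction tuple for $A^*$, and let $G':\mathrm{Gr}A^*\to\mathfrak H_{-,+}$, $G'\{f,A^*f\}:=Gf$. Then: (i) $G'$ is closed and bounded (with $\mathrm{Gr}A^*$ carrying the graph norm). (ii) For every $c\in\mathbb C$ with $|c|=1$, $(\mathfrak H_{+,-},\mathfrak H,cWG,-W^{-1})$ is a reduction tuple for $A^*$ (with the roles of $\mathfrak H_{-,+}$ and $\mathfrak H_{+,-}$ interchanged). (iii) $\mathrm{Gr}A=\ker G'$, $\mathrm{dom}A=\ker G$, and $W^\#=-W$.
   Context: $A$ is a closed densely defined symmetric operator in a Hilbert space $\mathfrak X$; $\mathrm{Gr}A^*$ and $\mathrm{dom}A^*$ carry graph norms. $\mathfrak H$, $\mathfrak H_{-,+}$, $\mathfrak H_{+,-}$ are Hilbert spaces forming a mixed-order duality: $\widetilde{\mathfrak H}_{\mp,\pm}:=\mathfrak H\cap\mathfrak H_{\mp,\pm}$ is dense in $\mathfrak H$ and in $\mathfrak H_{\mp,\pm}$, the forms $\|h\|^2_{\mathfrak H_{\mp,\pm}}$ on $\widetilde{\mathfrak H}_{\mp,\pm}$ are closed in $\mathfrak H$, and $\|h\|_{\mathfrak H_{\pm,\mp}}=\sup_{0\ne g\in\widetilde{\mathfrak H}_{\mp,\pm}}|(g|h)_{\mathfrak H}|/\|g\|_{\mathfrak H_{\mp,\pm}}$ for $h\in\widetilde{\mathfrak H}_{\pm,\mp}$. The $\mathfrak H$-pairing $\langle\cdot|\cdot\rangle_{\mathfrak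 H}$ is the unique bounded sesquilinear extension of $(\cdot|\cdot)_{\mathfrak H}$ from $\widetilde{\mathfrak H}_{-,+}\times\widetilde{\mathfrak H}_{+,-}$ to $\mathfrak H_{-,+}\times\mathfrak H_{+,-}$, together with $\langle h_{+,-}|h_{-,+}\rangle_{\mathfrak H}:=\overline{\langle h_{-,+}|h_{+,-}\rangle_{\mathfrak H}}$. A reduction tuple $(\mathfrak H_{-,+},\mathfrak H,G,W)$ for $A^*$: (R1) $G:\mathrm{dom}A^*\to\mathfrak H_{-,+}$ is a linear surjection; (R2) $W$ is a linear homeomorphism of $\mathfrak H_{-,+}$ onto $\mathfrak H_{+,-}$; (R3) $(A^*f|g)_{\mathfrak X}-(f|A^*g)_{\mathfrak X}=\langle Gf|WGg\rangle_{\mathfrak H}$ for all $f,g\in\mathrm{dom}A^*$. (The analogous definition with $\mathfrak H_{-,+}$ and $\mathfrak H_{+,-}$ interchanged is used in (ii).) For $W:\mathfrak H_{-,+}\to\mathfrak H_{+,-}$, $W^\#:\mathfrak H_{-,+}\to\mathfrak H_{+,-}$ is the operator determined by $\langle Wf|g\rangle_{\mathfrak H}=\langle f|W^\#g\rangle_{\mathfrak H}$ for all $f,g\in\mathfrak H_{-,+}$. *)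

theory Defs
  imports Complex_Main
begin

text \<open>Complex Hilbert spaces are modelled as carrier subsets of an ambient complex
vector space (scalar multiplication sc, assumed to satisfy vector_space sc), together
with a sesquilinear form (antilinear in the first, linear in the second argument).\<close>

definition sesq_on :: "(complex \<Rightarrow> 'a::plus \<Rightarrow> 'a) \<Rightarrow> 'a set \<Rightarrow> 'a set \<Rightarrow> ('a \<Rightarrow> 'a \<Rightarrow> complex) \<Rightarrow> bool" where
  "sesq_on sc S T p \<longleftrightarrow>
     (\<forall>x\<in>S. \<forall>y\<in>T. \<forall>z\<in>T. \<forall>c. p x (y + z) = p x y + p x z \<and> p x (sc c y) = c * p x y) \<and>
     (\<forall>x\<in>S. \<forall>z\<in>S. \<forall>y\<in>T. \<forall>c. p (x + z) y = p x y + p z y \<and> p (sc c x) y = cnj c * p x y)"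

definition ip_norm :: "('a::type \<Rightarrow> 'a \<Rightarrow> complex) \<Rightarrow> 'a \<Rightarrow> real" where
  "ip_norm ip x = sqrt (Re (ip x x))"

definition hilbert_space :: "(complex \<Rightarrow> 'a::ab_group_add \<Rightarrow> 'a) \<Rightarrow> 'a set \<Rightarrow> ('a \<Rightarrow> 'a \<Rightarrow> complex) \<Rightarrow> bool" where
  "hilbert_space sc S ip \<longleftrightarrow>
     module.subspace sc S \<and> sesq_on sc S S ip \<and>
     (\<forall>x\<in>S. \<forall>y\<in>S. ip y x = cnj (ip x y)) \<and>
     (\<forall>x\<in>S. Im (ip x x) = 0 \<and> Re (ip x x) \<ge> 0 \<and> (ip x x = 0 \<longrightarrow> x = 0)) \<and>
     (\<forall>s. (\<forall>n. s n \<in> S) \<and> (\<forall>e>0. \<exists>N. \<forall>m\<ge>N. \<forall>n\<ge>N. ip_norm ip (s m - s n) < e)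
          \<longrightarrow> (\<exists>l\<in>S. (\<lambda>n. ip_norm ip (s n - l)) \<longlonglongrightarrow> 0))"

definition dense_in :: "'a::ab_group_add set \<Rightarrow> ('a \<Rightarrow> 'a \<Rightarrow> complex) \<Rightarrow> 'a set \<Rightarrow> bool" where
  "dense_in S ip D \<longleftrightarrow> D \<subseteq> S \<and> (\<forall>x\<in>S. \<forall>e>0. \<exists>d\<in>D. ip_norm ip (x - d) < e)"

definition closed_form_in :: "'a::ab_group_add set \<Rightarrow> ('a \<Rightarrow> 'a \<Rightarrow> complex) \<Rightarrow> 'a set \<Rightarrow> ('a \<Rightarrow> real) \<Rightarrow> bool" where
  "closed_form_in H ip D q \<longleftrightarrow>
     (\<forall>s x. (\<forall>n. s n \<in> D) \<and> x \<in> H \<and> (\<lambda>n. ip_norm ip (s n - x)) \<longlonglongrightarrow> 0 \<and>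
            (\<forall>e>0. \<exists>N. \<forall>m\<ge>N. \<forall>n\<ge>N. q (s m - s n) < e)
        \<longrightarrow> x \<in> D \<and> (\<lambda>n. q (s n - x)) \<longlonglongrightarrow> 0)"

text \<open>For all h in D2: norm2 h = sup over 0 \<noteq> g in D1 of abs (ipH g h) / norm1 g
 (least upper bound in the nonnegative reals, so that sup of the empty set is 0).\<close>
definition dual_norm_cond :: "('a \<Rightarrow> 'a \<Rightarrow> complex) \<Rightarrow> 'a::zero set \<Rightarrow> ('a \<Rightarrow> 'a \<Rightarrow> complex) \<Rightarrow> 'a set \<Rightarrow> ('a \<Rightarrow> 'a \<Rightarrow> complex) \<Rightarrow> bool" where
  "dual_norm_cond ipH D1 ip1 D2 ip2 \<longleftrightarrow>
     (\<forall>h\<in>D2. (\<forall>g\<in>D1. g \<noteq> 0 \<longrightarrow> cmod (ipH g h) / ip_norm ip1 g \<le> ip_norm ip2 h) \<and>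
             (\<forall>b\<ge>0. (\<forall>g\<in>D1. g \<noteq> 0 \<longrightarrow> cmod (ipH g h) / ip_norm ip1 g \<le> b) \<longrightarrow> ip_norm ip2 h \<le> b))"

text \<open>Mixed-order duality of H, Hmp (= H_{-,+}) and Hpm (= H_{+,-}).\<close>
definition mixed_duality :: "(complex \<Rightarrow> 'a::ab_group_add \<Rightarrow> 'a) \<Rightarrow> 'a set \<Rightarrow> ('a \<Rightarrow> 'a \<Rightarrow> complex) \<Rightarrow>
     'a set \<Rightarrow> ('a \<Rightarrow> 'a \<Rightarrow> complex) \<Rightarrow> 'a set \<Rightarrow> ('a \<Rightarrow> 'a \<Rightarrow> complex) \<Rightarrow> bool" where
  "mixed_duality sc H ipH Hmp ipmp Hpm ippm \<longleftrightarrow>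
     hilbert_space sc H ipH \<and> hilbert_space sc Hmp ipmp \<and> hilbert_space sc Hpm ippm \<and>
     dense_in H ipH (H \<inter> Hmp) \<and> dense_in Hmp ipmp (H \<inter> Hmp) \<and>
     dense_in H ipH (H \<inter> Hpm) \<and> dense_in Hpm ippm (H \<inter> Hpm) \<and>
     closed_form_in H ipH (H \<inter> Hmp) (\<lambda>h. (ip_norm ipmp h)\<^sup>2) \<and>
     closed_form_in H ipH (H \<inter> Hpm) (\<lambda>h. (ip_norm ippm h)\<^sup>2) \<and>
     dual_norm_cond ipH (H \<inter> Hmp) ipmp (H \<inter> Hpm) ippm \<and>
     dual_norm_cond ipH (H \<inter> Hpm) ippm (H \<inter> Hmp) ipmp"

text \<open>p is the H-pairing on Hmp x Hpm: the bounded sesquilinear extension of ipH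
 from (H \<inter> Hmp) x (H \<inter> Hpm). (It is unique by density.) The pairing in the
 reverse order is given by cnj (p b a).\<close>
definition is_H_pairing :: "(complex \<Rightarrow> 'a::ab_group_add \<Rightarrow> 'a) \<Rightarrow> 'a set \<Rightarrow> ('a \<Rightarrow> 'a \<Rightarrow> complex) \<Rightarrow>
     'a set \<Rightarrow> ('a \<Rightarrow> 'a \<Rightarrow> complex) \<Rightarrow> 'a set \<Rightarrow> ('a \<Rightarrow> 'a \<Rightarrow> complex) \<Rightarrow> ('a \<Rightarrow> 'a \<Rightarrow> complex) \<Rightarrow> bool" where
  "is_H_pairing sc H ipH Hmp ipmp Hpm ippm p \<longleftrightarrow>
     sesq_on sc Hmp Hpm p \<and>
     (\<exists>C. \<forall>x\<in>Hmp. \<forall>y\<in>Hpm. cmod (p x y) \<le> C * ip_norm ipmp x * ip_norm ippm y) \<and>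
     (\<forall>g\<in>H \<inter> Hmp. \<forall>h\<in>H \<inter> Hpm. p g h = ipH g h)"

definition lin_on :: "(complex \<Rightarrow> 'a::ab_group_add \<Rightarrow> 'a) \<Rightarrow> (complex \<Rightarrow> 'b::ab_group_add \<Rightarrow> 'b) \<Rightarrow> 'a set \<Rightarrow> ('a \<Rightarrow> 'b) \<Rightarrow> bool" where
  "lin_on sc1 sc2 D T \<longleftrightarrow> module.subspace sc1 D \<and>
     (\<forall>x\<in>D. \<forall>y\<in>D. T (x + y) = T x + T y) \<and> (\<forall>x\<in>D. \<forall>c. T (sc1 c x) = sc2 c (T x))"

definition gr_norm :: "('a \<Rightarrow> 'a \<Rightarrow> complex) \<Rightarrow> 'a \<Rightarrow> 'a \<Rightarrow> real" where
  "gr_norm ip f h = sqrt ((ip_norm ip f)\<^sup>2 + (ip_norm ip h)\<^sup>2)"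

definition graph :: "'a set \<Rightarrow> ('a \<Rightarrow> 'b) \<Rightarrow> ('a \<times> 'b) set" where
  "graph D T = {(f, T f) | f. f \<in> D}"

definition cdd_symmetric :: "(complex \<Rightarrow> 'x::ab_group_add \<Rightarrow> 'x) \<Rightarrow> 'x set \<Rightarrow> ('x \<Rightarrow> 'x \<Rightarrow> complex) \<Rightarrow> 'x set \<Rightarrow> ('x \<Rightarrow> 'x) \<Rightarrow> bool" where
  "cdd_symmetric sc X ip domA A \<longleftrightarrow>
     lin_on sc sc domA A \<and> A ` domA \<subseteq> X \<and> dense_in X ip domA \<and>
     (\<forall>s f h. (\<forall>n. s n \<in> domA) \<and> f \<in> X \<and> h \<in> X \<and>
              (\<lambda>n. gr_norm ip (s n - f) (A (s n) - h)) \<longlonglongrightarrow> 0 \<longrightarrow> f \<in> domA \<and> A f = h) \<and>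
     (\<forall>f\<in>domA. \<forall>g\<in>domA. ip (A f) g = ip f (A g))"

definition adj_dom :: "'x set \<Rightarrow> ('x \<Rightarrow> 'x \<Rightarrow> complex) \<Rightarrow> 'x set \<Rightarrow> ('x \<Rightarrow> 'x) \<Rightarrow> 'x set" where
  "adj_dom X ip domA A = {g \<in> X. \<exists>h\<in>X. \<forall>f\<in>domA. ip (A f) g = ip f h}"

definition adj :: "'x set \<Rightarrow> ('x \<Rightarrow> 'x \<Rightarrow> complex) \<Rightarrow> 'x set \<Rightarrow> ('x \<Rightarrow> 'x) \<Rightarrow> 'x \<Rightarrow> 'x" where
  "adj X ip domA A g = (THE h. h \<in> X \<and> (\<forall>f\<in>domA. ip (A f) g = ip f h))"

definition continuous_betw :: "'a::ab_group_add set \<Rightarrow> ('a \<Rightarrow> 'a \<Rightarrow> complex) \<Rightarrow> 'b::ab_group_add set \<Rightarrow> ('b \<Rightarrow> 'b \<Rightarrow> complex) \<Rightarrow> ('a \<Rightarrow> 'b) \<Rightarrow> bool" where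
  "continuous_betw S ipS T ipT F \<longleftrightarrow>
     (\<forall>x\<in>S. \<forall>e>0. \<exists>d>0. \<forall>y\<in>S. ip_norm ipS (y - x) < d \<longrightarrow> ip_norm ipT (F y - F x) < e)"

definition lin_homeo :: "(complex \<Rightarrow> 'a::ab_group_add \<Rightarrow> 'a) \<Rightarrow> 'a set \<Rightarrow> ('a \<Rightarrow> 'a \<Rightarrow> complex) \<Rightarrow> 'a set \<Rightarrow> ('a \<Rightarrow> 'a \<Rightarrow> complex) \<Rightarrow> ('a \<Rightarrow> 'a) \<Rightarrow> bool" where
  "lin_homeo sc S ipS T ipT W \<longleftrightarrow>
     lin_on sc sc S W \<and> bij_betw W S T \<and> continuous_betw S ipS T ipT W \<and>
     continuous_betw T ipT S ipS (inv_into S W)"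

text \<open>Reduction tuple (S, H, G, W) for A*, where S is the range space of G, T the range of W,
 and p the pairing of S x T used in (R3).\<close>
definition reduction_tuple :: "(complex \<Rightarrow> 'x::ab_group_add \<Rightarrow> 'x) \<Rightarrow> 'x set \<Rightarrow> ('x \<Rightarrow> 'x \<Rightarrow> complex) \<Rightarrow> 'x set \<Rightarrow> ('x \<Rightarrow> 'x) \<Rightarrow>
     (complex \<Rightarrow> 'h::ab_group_add \<Rightarrow> 'h) \<Rightarrow> 'h set \<Rightarrow> ('h \<Rightarrow> 'h \<Rightarrow> complex) \<Rightarrow> 'h set \<Rightarrow> ('h \<Rightarrow> 'h \<Rightarrow> complex) \<Rightarrow>
     ('h \<Rightarrow> 'h \<Rightarrow> complex) \<Rightarrow> ('x \<Rightarrow> 'h) \<Rightarrow> ('h \<Rightarrow> 'h) \<Rightarrow> bool" where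
  "reduction_tuple scX X ipX domA A sc S ipS T ipT p G W \<longleftrightarrow>
     lin_on scX sc (adj_dom X ipX domA A) G \<and> G ` (adj_dom X ipX domA A) = S \<and>
     lin_homeo sc S ipS T ipT W \<and>
     (\<forall>f\<in>adj_dom X ipX domA A. \<forall>g\<in>adj_dom X ipX domA A.
        ipX (adj X ipX domA A f) g - ipX f (adj X ipX domA A g) = p (G f) (W (G g)))"

definition closed_op :: "'a set \<Rightarrow> ('a \<Rightarrow> 'a \<Rightarrow> real) \<Rightarrow> 'a set \<Rightarrow> 'b set \<Rightarrow> ('b \<Rightarrow> 'b \<Rightarrow> real) \<Rightarrow> ('a \<Rightarrow> 'b) \<Rightarrow> bool" where
  "closed_op U dU D T dT F \<longleftrightarrow>
     (\<forall>s u y. (\<forall>n. s n \<in> D) \<and> u \<in> U \<and> y \<in> T \<and> (\<lambda>n. dU (s n) u) \<longlonglongrightarrow> 0 \<and> (\<lambda>n. dT (F (s n)) y) \<longlonglongrightarrow> 0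
        \<longrightarrow> u \<in> D \<and> F u = y)"

definition bounded_op :: "'a set \<Rightarrow> ('a \<Rightarrow> real) \<Rightarrow> ('b \<Rightarrow> real) \<Rightarrow> ('a \<Rightarrow> 'b) \<Rightarrow> bool" where
  "bounded_op D nD nT F \<longleftrightarrow> (\<exists>C. \<forall>u\<in>D. nT (F u) \<le> C * nD u)"

text \<open>W^# for W : Hmp \<rightarrow> Hpm: the operator Hmp \<rightarrow> Hpm with
 <W f | g> = <f | W^# g> for f, g in Hmp (the left pairing is the reverse-order one);
 normalised to 0 outside Hmp.\<close>
definition sharp :: "'a::zero set \<Rightarrow> 'a set \<Rightarrow> ('a \<Rightarrow> 'a \<Rightarrow> complex) \<Rightarrow> ('a \<Rightarrow> 'a) \<Rightarrow> 'a \<Rightarrow> 'a" where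
  "sharp Hmp Hpm p W = (THE V. (\<forall>x. x \<notin> Hmp \<longrightarrow> V x = 0) \<and> (\<forall>x\<in>Hmp. V x \<in> Hpm) \<and>
       (\<forall>f\<in>Hmp. \<forall>g\<in>Hmp. cnj (p g (W f)) = p f (V g)))"

end

theory Submission
  imports Defs "HOL-Analysis.Analysis"
begin

lemma sesq_props:
  assumes "vector_space sc" "sesq_on sc S T p" "module.subspace sc S" "module.subspace sc T"
  shows sesq_addR: "x\<in>S \<Longrightarrow> y\<in>T \<Longrightarrow> z\<in>T \<Longrightarrow> p x (y + z) = p x y + p x z"
    and sesq_scaleR: "x\<in>S \<Longrightarrow> y\<in>T \<Longrightarrow> p x (sc c y) = c * p x y"
    and sesq_addL: "x\<in>S \<Longrightarrow> z\<in>S \<Longrightarrow> y\<in>T \<Longrightarrow> p (x + z) y = p x y + p z y"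
    and sesq_scaleL: "x\<in>S \<Longrightarrow> y\<in>T \<Longrightarrow> p (sc c x) y = cnj c * p x y"
    and sesq_negR: "x\<in>S \<Longrightarrow> y\<in>T \<Longrightarrow> p x (- y) = - p x y"
    and sesq_negL: "x\<in>S \<Longrightarrow> y\<in>T \<Longrightarrow> p (- x) y = - p x y"
    and sesq_diffR: "x\<in>S \<Longrightarrow> y\<in>T \<Longrightarrow> z\<in>T \<Longrightarrow> p x (y - z) = p x y - p x z"
    and sesq_diffL: "x\<in>S \<Longrightarrow> z\<in>S \<Longrightarrow> y\<in>T \<Longrightarrow> p (x - z) y = p x y - p z y"
    and sesq_zeroR: "x\<in>S \<Longrightarrow> p x 0 = 0"
    and sesq_zeroL: "y\<in>T \<Longrightarrow> p 0 y = 0"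
proof -
  interpret vector_space sc by fact
  have AB: "(\<forall>x\<in>S. \<forall>y\<in>T. \<forall>z\<in>T. \<forall>c. p x (y + z) = p x y + p x z \<and> p x (sc c y) = c * p x y) \<and>
     (\<forall>x\<in>S. \<forall>z\<in>S. \<forall>y\<in>T. \<forall>c. p (x + z) y = p x y + p z y \<and> p (sc c x) y = cnj c * p x y)"
    using assms(2) unfolding sesq_on_def .
  note A = conjunct1[OF AB] and B = conjunct2[OF AB]
  show aR: "x\<in>S \<Longrightarrow> y\<in>T \<Longrightarrow> z\<in>T \<Longrightarrow> p x (y + z) = p x y + p x z" for x y z
    using A[rule_format, of x y z 0] by simp
  show sR: "x\<in>S \<Longrightarrow> y\<in>T \<Longrightarrow> p x (sc c y) = c * p x y" for x y c
    using A[rule_format, of x y y c] by simp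
  show aL: "x\<in>S \<Longrightarrow> z\<in>S \<Longrightarrow> y\<in>T \<Longrightarrow> p (x + z) y = p x y + p z y" for x y z
    using B[rule_format, of x z y 0] by simp
  show sL: "x\<in>S \<Longrightarrow> y\<in>T \<Longrightarrow> p (sc c x) y = cnj c * p x y" for x y c
    using B[rule_format, of x x y c] by simp
  show nR: "x\<in>S \<Longrightarrow> y\<in>T \<Longrightarrow> p x (- y) = - p x y" for x y
    using sR[of x y "-1"] by simp
  show nL: "x\<in>S \<Longrightarrow> y\<in>T \<Longrightarrow> p (- x) y = - p x y" for x y
    using sL[of x y "-1"] by simp
  show "x\<in>S \<Longrightarrow> y\<in>T \<Longrightarrow> z\<in>T \<Longrightarrow> p x (y - z) = p x y - p x z" for x y z
    using aR[of x y "-z"] nR[of x z] subspace_neg[OF assms(4)] by simp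
  show "x\<in>S \<Longrightarrow> z\<in>S \<Longrightarrow> y\<in>T \<Longrightarrow> p (x - z) y = p x y - p z y" for x y z
    using aL[of x "-z" y] nL[of z y] subspace_neg[OF assms(3)] by simp
  show "x\<in>S \<Longrightarrow> p x 0 = 0" for x
    using sR[of x 0 0] subspace_0[OF assms(4)] by simp
  show "y\<in>T \<Longrightarrow> p 0 y = 0" for y
    using sL[of 0 y 0] subspace_0[OF assms(3)] by simp
qed

locale hs = vector_space sc for sc :: "complex \<Rightarrow> 'a::ab_group_add \<Rightarrow> 'a" +
  fixes S :: "'a set" and ip :: "'a \<Rightarrow> 'a \<Rightarrow> complex"
  assumes hil: "hilbert_space sc S ip"
begin

lemma sub: "subspace S" using hil unfolding hilbert_space_def by blast
lemma sesq: "sesq_on sc S S ip" using hil unfolding hilbert_space_def by blast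
lemma conj_sym: "x\<in>S \<Longrightarrow> y\<in>S \<Longrightarrow> ip y x = cnj (ip x y)"
  using hil unfolding hilbert_space_def by blast
lemma pos: "x\<in>S \<Longrightarrow> Im (ip x x) = 0 \<and> Re (ip x x) \<ge> 0 \<and> (ip x x = 0 \<longrightarrow> x = 0)"
  using hil unfolding hilbert_space_def by blast
lemma complete: "(\<forall>n. s n \<in> S) \<Longrightarrow> (\<forall>e>0. \<exists>N. \<forall>m\<ge>N. \<forall>n\<ge>N. ip_norm ip (s m - s n) < e)
          \<Longrightarrow> (\<exists>l\<in>S. (\<lambda>n. ip_norm ip (s n - l)) \<longlonglongrightarrow> 0)"
  using hil unfolding hilbert_space_def by blast

lemma mem_add: "x\<in>S \<Longrightarrow> y\<in>S \<Longrightarrow> x + y \<in> S" using sub subspace_add by blast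
lemma mem_diff: "x\<in>S \<Longrightarrow> y\<in>S \<Longrightarrow> x - y \<in> S" using sub subspace_diff by blast
lemma mem_neg: "x\<in>S \<Longrightarrow> - x \<in> S" using sub subspace_neg by blast
lemma mem_scale: "x\<in>S \<Longrightarrow> sc c x \<in> S" using sub subspace_scale by blast
lemma mem_zero: "0 \<in> S" using sub subspace_0 by blast

lemmas ipR = sesq_props[OF vector_space_axioms sesq sub sub]

lemma ip_self: "x\<in>S \<Longrightarrow> ip x x = complex_of_real ((ip_norm ip x)\<^sup>2)"
  using pos[of x] unfolding ip_norm_def by (simp add: complex_eq_iff)

lemma norm_nonneg: "x\<in>S \<Longrightarrow> ip_norm ip x \<ge> 0" using pos[of x] unfolding ip_norm_def by simp

lemma norm_zero_iff: "x\<in>S \<Longrightarrow> ip_norm ip x = 0 \<longleftrightarrow> x = 0"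
  using pos[of x] ipR(9)[OF mem_zero] unfolding ip_norm_def by (auto simp: complex_eq_iff)

lemma norm_zero[simp]: "ip_norm ip 0 = 0"
  using ipR(9)[OF mem_zero] unfolding ip_norm_def by simp

lemma norm_scale: "x\<in>S \<Longrightarrow> ip_norm ip (sc c x) = cmod c * ip_norm ip x"
proof -
  assume x: "x\<in>S"
  have "ip (sc c x) (sc c x) = cnj c * c * ip x x"
    using ipR(2)[OF mem_scale[OF x] x] ipR(4)[OF x x] x mem_scale by simp
  also have "cnj c * c = complex_of_real ((cmod c)\<^sup>2)" by (subst mult.commute) (rule complex_norm_square[symmetric])
  finally have "Re (ip (sc c x) (sc c x)) = (cmod c)\<^sup>2 * (ip_norm ip x)\<^sup>2"
    using ip_self[OF x] by simp
  then have "ip_norm ip (sc c x) = sqrt ((cmod c * ip_norm ip x)\<^sup>2)"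
    unfolding ip_norm_def[of ip "sc c x"] by (simp add: power_mult_distrib)
  then show ?thesis using norm_nonneg[OF x] by simp
qed

lemma norm_neg: "x\<in>S \<Longrightarrow> ip_norm ip (- x) = ip_norm ip x"
  using norm_scale[of x "-1"] by simp

lemma norm_commute: "x\<in>S \<Longrightarrow> y\<in>S \<Longrightarrow> ip_norm ip (x - y) = ip_norm ip (y - x)"
  using norm_neg[of "y - x"] mem_diff by (metis minus_diff_eq)

lemma cauchy_schwarz: "x\<in>S \<Longrightarrow> y\<in>S \<Longrightarrow> cmod (ip x y) \<le> ip_norm ip x * ip_norm ip y"
proof -
  assume x: "x\<in>S" and y: "y\<in>S"
  show ?thesis
  proof (cases "y = 0")
    case True then show ?thesis using ipR(9)[OF x] norm_nonneg by simp
  next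
    case False
    define Nx where "Nx = ip_norm ip x"
    define Ny where "Ny = ip_norm ip y"
    have Ny0: "Ny > 0" using norm_zero_iff[OF y] False norm_nonneg[OF y] Ny_def by auto
    define a where "a = ip x y"
    have yx: "ip y x = cnj a" using conj_sym[OF x y] a_def by simp
    have yy: "ip y y = complex_of_real (Ny\<^sup>2)" using ip_self[OF y] Ny_def by simp
    have xx: "ip x x = complex_of_real (Nx\<^sup>2)" using ip_self[OF x] Nx_def by simp
    define t where "t = cnj a / complex_of_real (Ny\<^sup>2)"
    define z where "z = x - sc t y"
    have ty: "sc t y \<in> S" using mem_scale[OF y] .
    have z: "z \<in> S" using mem_diff[OF x ty] z_def by simp
    have "ip z z = ip x z - ip (sc t y) z" using ipR(8)[OF x ty z] z_def by simp
    also have "ip x z = ip x x - t * a" using ipR(7)[OF x x ty] ipR(2)[OF x y] z_def a_def by simp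
    also have "ip (sc t y) z = cnj t * (ip y x - t * ip y y)"
      using ipR(4)[OF y z] ipR(7)[OF y x ty] ipR(2)[OF y y] z_def by simp
    also have "ip y x - t * ip y y = 0" using yx yy Ny0 unfolding t_def by simp
    finally have "ip z z = complex_of_real (Nx\<^sup>2) - cnj a * a / complex_of_real (Ny\<^sup>2)"
      using xx t_def by (simp add: mult.commute)
    also have "cnj a * a = complex_of_real ((cmod a)\<^sup>2)" by (subst mult.commute) (rule complex_norm_square[symmetric])
    finally have "Re (ip z z) = Nx\<^sup>2 - (cmod a)\<^sup>2 / Ny\<^sup>2"
      by (simp del: of_real_power add: of_real_divide[symmetric] of_real_diff[symmetric] del: of_real_diff of_real_divide)
    with pos[OF z] have "(cmod a)\<^sup>2 / Ny\<^sup>2 \<le> Nx\<^sup>2" by simp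
    then have "(cmod a)\<^sup>2 \<le> (Nx * Ny)\<^sup>2" using Ny0 by (simp add: field_simps power_mult_distrib)
    then have "cmod a \<le> Nx * Ny"
      by (rule power2_le_imp_le) (simp add: Nx_def Ny_def norm_nonneg[OF x] norm_nonneg[OF y])
    then show ?thesis using a_def Nx_def Ny_def by simp
  qed
qed

lemma triangle: "x\<in>S \<Longrightarrow> y\<in>S \<Longrightarrow> ip_norm ip (x + y) \<le> ip_norm ip x + ip_norm ip y"
proof -
  assume x: "x\<in>S" and y: "y\<in>S"
  have xy: "x + y \<in> S" using mem_add[OF x y] .
  have "ip (x+y) (x+y) = ip x x + ip x y + (ip y x + ip y y)"
    using ipR(3)[OF x y xy] ipR(1)[OF x x y] ipR(1)[OF y x y] by simp
  then have "Re (ip (x+y) (x+y)) = Re (ip x x) + Re (ip y y) + 2 * Re (ip x y)"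
    using conj_sym[OF x y] by simp
  also have "Re (ip x y) \<le> ip_norm ip x * ip_norm ip y"
    using cauchy_schwarz[OF x y] complex_Re_le_cmod[of "ip x y"] by linarith
  finally have "(ip_norm ip (x+y))\<^sup>2 \<le> (ip_norm ip x + ip_norm ip y)\<^sup>2"
    using ip_self[OF x] ip_self[OF y] ip_self[OF xy] by (simp add: power2_sum)
  then show ?thesis by (rule power2_le_imp_le[OF _ add_nonneg_nonneg[OF norm_nonneg[OF x] norm_nonneg[OF y]]])
qed

lemma triangle_diff: "x\<in>S \<Longrightarrow> y\<in>S \<Longrightarrow> z\<in>S \<Longrightarrow> ip_norm ip (x - z) \<le> ip_norm ip (x - y) + ip_norm ip (y - z)"
  using triangle[OF mem_diff[of x y] mem_diff[of y z]] by simp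

lemma norm_diff_le: "x\<in>S \<Longrightarrow> y\<in>S \<Longrightarrow> \<bar>ip_norm ip x - ip_norm ip y\<bar> \<le> ip_norm ip (x - y)"
proof -
  assume x: "x\<in>S" and y: "y\<in>S"
  have 1: "ip_norm ip x \<le> ip_norm ip (x - y) + ip_norm ip y"
    using triangle[OF mem_diff[OF x y] y] by simp
  have 2: "ip_norm ip y \<le> ip_norm ip (y - x) + ip_norm ip x"
    using triangle[OF mem_diff[OF y x] x] by simp
  show ?thesis using 1 2 norm_commute[OF x y] by linarith
qed

lemma expand_sq: "v\<in>S \<Longrightarrow> b\<in>S \<Longrightarrow>
  Re (ip (v - sc t b) (v - sc t b)) = (ip_norm ip v)\<^sup>2 - 2 * Re (cnj t * ip b v) + (cmod t)\<^sup>2 * (ip_norm ip b)\<^sup>2"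
proof -
  assume v: "v\<in>S" and b: "b\<in>S"
  have tb: "sc t b \<in> S" using mem_scale[OF b] .
  have w: "v - sc t b \<in> S" using mem_diff[OF v tb] .
  have "ip (v - sc t b) (v - sc t b) = ip v (v - sc t b) - ip (sc t b) (v - sc t b)"
    using ipR(8)[OF v tb w] .
  also have "ip v (v - sc t b) = ip v v - t * ip v b" using ipR(7)[OF v v tb] ipR(2)[OF v b] by simp
  also have "ip (sc t b) (v - sc t b) = cnj t * (ip b v - t * ip b b)"
    using ipR(4)[OF b w] ipR(7)[OF b v tb] ipR(2)[OF b b] by simp
  finally have e: "ip (v - sc t b) (v - sc t b) = ip v v - t * cnj (ip b v) - cnj t * ip b v + (cnj t * t) * ip b b"
    using conj_sym[OF b v] by (simp add: algebra_simps)
  have tt: "cnj t * t = complex_of_real ((cmod t)\<^sup>2)" by (subst mult.commute) (rule complex_norm_square[symmetric])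
  have r: "Re (t * cnj (ip b v)) = Re (cnj t * ip b v)"
    by simp
  show ?thesis unfolding e tt using r ip_self[OF v] ip_self[OF b]
    by (simp del: of_real_power)
qed

lemma parallelogram: "u\<in>S \<Longrightarrow> v\<in>S \<Longrightarrow>
  (ip_norm ip (u + v))\<^sup>2 + (ip_norm ip (u - v))\<^sup>2 = 2 * (ip_norm ip u)\<^sup>2 + 2 * (ip_norm ip v)\<^sup>2"
proof -
  assume u: "u\<in>S" and v: "v\<in>S"
  have a: "u + v \<in> S" "u - v \<in> S" using mem_add[OF u v] mem_diff[OF u v] by auto
  have "ip (u + v) (u + v) = ip u u + ip u v + (ip v u + ip v v)"
    using ipR(3)[OF u v a(1)] ipR(1)[OF u u v] ipR(1)[OF v u v] by simp
  moreover have "ip (u - v) (u - v) = ip u u - ip u v - (ip v u - ip v v)"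
    using ipR(8)[OF u v a(2)] ipR(7)[OF u u v] ipR(7)[OF v u v] by simp
  ultimately have "ip (u + v) (u + v) + ip (u - v) (u - v) = 2 * ip u u + 2 * ip v v" by simp
  then have "Re (ip (u + v) (u + v)) + Re (ip (u - v) (u - v)) = 2 * Re (ip u u) + 2 * Re (ip v v)"
    by (metis plus_complex.sel(1) Re_complex_of_real times_complex.sel(1) mult_2 complex_Re_numeral)
  then show ?thesis using ip_self[OF u] ip_self[OF v] ip_self[OF a(1)] ip_self[OF a(2)] by simp
qed

lemma ip_tendsto_right: "z\<in>S \<Longrightarrow> x\<in>S \<Longrightarrow> (\<And>n. s n \<in> S) \<Longrightarrow> (\<lambda>n. ip_norm ip (s n - x)) \<longlonglongrightarrow> 0
   \<Longrightarrow> (\<lambda>n. ip z (s n)) \<longlonglongrightarrow> ip z x"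
proof -
  assume z: "z\<in>S" and x: "x\<in>S" and s: "\<And>n. s n \<in> S" and l: "(\<lambda>n. ip_norm ip (s n - x)) \<longlonglongrightarrow> 0"
  have b: "\<forall>n. norm (ip z (s n) - ip z x) \<le> ip_norm ip z * ip_norm ip (s n - x)"
    using ipR(7)[OF z s x] cauchy_schwarz[OF z mem_diff[OF s x]] by simp
  have "(\<lambda>n. ip_norm ip z * ip_norm ip (s n - x)) \<longlonglongrightarrow> 0" by (rule tendsto_mult_right_zero[OF l])
  then have "(\<lambda>n. ip z (s n) - ip z x) \<longlonglongrightarrow> 0"
    by (rule Lim_null_comparison[OF always_eventually[OF b]])
  then show ?thesis by (rule LIM_zero_cancel)
qed

lemma ip_tendsto_left: "z\<in>S \<Longrightarrow> x\<in>S \<Longrightarrow> (\<And>n. s n \<in> S) \<Longrightarrow> (\<lambda>n. ip_norm ip (s n - x)) \<longlonglongrightarrow> 0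
   \<Longrightarrow> (\<lambda>n. ip (s n) z) \<longlonglongrightarrow> ip x z"
proof -
  assume z: "z\<in>S" and x: "x\<in>S" and s: "\<And>n. s n \<in> S" and l: "(\<lambda>n. ip_norm ip (s n - x)) \<longlonglongrightarrow> 0"
  have b: "\<forall>n. norm (ip (s n) z - ip x z) \<le> ip_norm ip (s n - x) * ip_norm ip z"
    using ipR(8)[OF s x z] cauchy_schwarz[OF mem_diff[OF s x] z] by simp
  have "(\<lambda>n. ip_norm ip (s n - x) * ip_norm ip z) \<longlonglongrightarrow> 0" by (rule tendsto_mult_left_zero[OF l])
  then have "(\<lambda>n. ip (s n) z - ip x z) \<longlonglongrightarrow> 0"
    by (rule Lim_null_comparison[OF always_eventually[OF b]])
  then show ?thesis by (rule LIM_zero_cancel)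
qed

lemma norm_tendsto: "x\<in>S \<Longrightarrow> (\<And>n. s n \<in> S) \<Longrightarrow> (\<lambda>n. ip_norm ip (s n - x)) \<longlonglongrightarrow> 0
   \<Longrightarrow> (\<lambda>n. ip_norm ip (s n)) \<longlonglongrightarrow> ip_norm ip x"
proof -
  assume x: "x\<in>S" and s: "\<And>n. s n \<in> S" and l: "(\<lambda>n. ip_norm ip (s n - x)) \<longlonglongrightarrow> 0"
  have b: "\<forall>n. norm (ip_norm ip (s n) - ip_norm ip x) \<le> ip_norm ip (s n - x)"
    using norm_diff_le[OF s x] by simp
  have "(\<lambda>n. ip_norm ip (s n) - ip_norm ip x) \<longlonglongrightarrow> 0"
    by (rule Lim_null_comparison[OF always_eventually[OF b] l])
  then show ?thesis by (rule LIM_zero_cancel)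
qed

end

lemma dual_bound:
  assumes vs: "vector_space sc"
  and ha: "hilbert_space sc Ha ipa" and hb: "hilbert_space sc Hb ipb"
  and dens: "dense_in Ha ipa (H \<inter> Ha)"
  and dn: "dual_norm_cond ipH (H \<inter> Hb) ipb (H \<inter> Ha) ipa"
  and qdiff: "\<And>x z y. x\<in>Ha \<Longrightarrow> z\<in>Ha \<Longrightarrow> y\<in>Hb \<Longrightarrow> q (x - z) y = q x y - q z y"
  and qbd: "\<And>x y. x\<in>Ha \<Longrightarrow> y\<in>Hb \<Longrightarrow> cmod (q x y) \<le> C * ip_norm ipa x * ip_norm ipb y"
  and qH: "\<And>g h. g \<in> H \<inter> Hb \<Longrightarrow> h \<in> H \<inter> Ha \<Longrightarrow> cmod (ipH g h) = cmod (q h g)"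
  and x: "x\<in>Ha" and K0: "K \<ge> 0" and K: "\<And>k. k\<in>Hb \<Longrightarrow> cmod (q x k) \<le> K * ip_norm ipb k"
  shows "ip_norm ipa x \<le> K"
proof -
  interpret A: hs sc Ha ipa using vs ha by (simp add: hs_def hs_axioms_def)
  interpret B: hs sc Hb ipb using vs hb by (simp add: hs_def hs_axioms_def)
  define C' where "C' = max C 0"
  have C'0: "C' \<ge> 0" unfolding C'_def by simp
  have dn2: "ip_norm ipa h \<le> b" if "h\<in>H \<inter> Ha" "b \<ge> 0" "\<And>g. g\<in>H \<inter> Hb \<Longrightarrow> g \<noteq> 0 \<Longrightarrow> cmod (ipH g h) / ip_norm ipb g \<le> b" for h b
    using conjunct2[OF bspec[OF dn[unfolded dual_norm_cond_def] that(1)], rule_format, OF that(2)] that(3) by blast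
  have main: "ip_norm ipa x \<le> K + (1 + C') * e" if e: "e > 0" for e
  proof -
    obtain d where d: "d \<in> H \<inter> Ha" and xd: "ip_norm ipa (x - d) < e"
      using dens x e unfolding dense_in_def by blast
    have dHa: "d \<in> Ha" using d by blast
    have "cmod (ipH g d) / ip_norm ipb g \<le> K + C' * e" if g: "g \<in> H \<inter> Hb" "g \<noteq> 0" for g
    proof -
      have gb: "g \<in> Hb" using g by blast
      have gpos: "ip_norm ipb g > 0" using B.norm_zero_iff[OF gb] B.norm_nonneg[OF gb] g(2) by linarith
      have "q d g = q x g - q (x - d) g" using qdiff[OF x dHa gb] by simp
      then have "cmod (q d g) \<le> cmod (q x g) + cmod (q (x - d) g)"
        by (metis norm_triangle_ineq4)
      also have "cmod (q (x - d) g) \<le> C' * ip_norm ipa (x - d) * ip_norm ipb g"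
      proof -
        have "cmod (q (x - d) g) \<le> C * ip_norm ipa (x - d) * ip_norm ipb g"
          using qbd[OF A.mem_diff[OF x dHa] gb] .
        also have "\<dots> \<le> C' * ip_norm ipa (x - d) * ip_norm ipb g"
          unfolding C'_def
          by (intro mult_right_mono B.norm_nonneg[OF gb] A.norm_nonneg[OF A.mem_diff[OF x dHa]]) simp
        finally show ?thesis .
      qed
      also have "C' * ip_norm ipa (x - d) * ip_norm ipb g \<le> C' * e * ip_norm ipb g"
        using xd C'0 B.norm_nonneg[OF gb] by (intro mult_right_mono mult_left_mono) auto
      finally have "cmod (q d g) \<le> (K + C' * e) * ip_norm ipb g"
        using K[OF gb] by (simp add: algebra_simps)
      then show ?thesis using qH[OF g(1) d] gpos by (simp add: pos_divide_le_eq)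
    qed
    moreover have "K + C' * e \<ge> 0" using K0 C'0 e by simp
    ultimately have "ip_norm ipa d \<le> K + C' * e"
      using dn2[OF d] by blast
    moreover have "ip_norm ipa x \<le> ip_norm ipa (x - d) + ip_norm ipa d"
      using A.triangle[OF A.mem_diff[OF x dHa] dHa] by simp
    ultimately show ?thesis using xd by (simp add: algebra_simps)
  qed
  show ?thesis
  proof (rule field_le_epsilon)
    fix e :: real assume e: "e > 0"
    have "ip_norm ipa x \<le> K + (1 + C') * (e / (1 + C'))"
      using main[of "e / (1 + C')"] e C'0 by simp
    then show "ip_norm ipa x \<le> K + e" using C'0 by simp
  qed
qed

locale setting =
  fixes scX :: "complex \<Rightarrow> 'x::ab_group_add \<Rightarrow> 'x"
    and X domA :: "'x set" and ipX :: "'x \<Rightarrow> 'x \<Rightarrow> complex" and A :: "'x \<Rightarrow> 'x"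
    and sc :: "complex \<Rightarrow> 'h::ab_group_add \<Rightarrow> 'h"
    and H Hmp Hpm :: "'h set" and ipH ipmp ippm p :: "'h \<Rightarrow> 'h \<Rightarrow> complex"
    and G :: "'x \<Rightarrow> 'h" and W :: "'h \<Rightarrow> 'h"
  assumes vsX: "vector_space scX" and vs: "vector_space sc"
    and hX: "hilbert_space scX X ipX"
    and cdd: "cdd_symmetric scX X ipX domA A"
    and md: "mixed_duality sc H ipH Hmp ipmp Hpm ippm"
    and hp: "is_H_pairing sc H ipH Hmp ipmp Hpm ippm p"
    and rt: "reduction_tuple scX X ipX domA A sc Hmp ipmp Hpm ippm p G W"
begin

sublocale X: hs scX X ipX using vsX hX by (simp add: hs_def hs_axioms_def)

lemma hHm: "hilbert_space sc Hmp ipmp" using md unfolding mixed_duality_def by (elim conjE) assumption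
lemma hHp: "hilbert_space sc Hpm ippm" using md unfolding mixed_duality_def by (elim conjE) assumption
lemma hH: "hilbert_space sc H ipH" using md unfolding mixed_duality_def by (elim conjE) assumption

sublocale Hm: hs sc Hmp ipmp using vs hHm by (simp add: hs_def hs_axioms_def)
sublocale Hp: hs sc Hpm ippm using vs hHp by (simp add: hs_def hs_axioms_def)
sublocale HH: hs sc H ipH using vs hH by (simp add: hs_def hs_axioms_def)

abbreviation "Ds \<equiv> adj_dom X ipX domA A"
abbreviation "As \<equiv> adj X ipX domA A"

lemma A_lin: "lin_on scX scX domA A" using cdd unfolding cdd_symmetric_def by (elim conjE) assumption
lemma domA_sub: "module.subspace scX domA" using A_lin unfolding lin_on_def by (elim conjE) assumption
lemma A_add: "x\<in>domA \<Longrightarrow> y\<in>domA \<Longrightarrow> A (x + y) = A x + A y" using A_lin unfolding lin_on_def by blast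
lemma A_scale: "x\<in>domA \<Longrightarrow> A (scX c x) = scX c (A x)" using A_lin unfolding lin_on_def by blast
lemma A_X: "x\<in>domA \<Longrightarrow> A x \<in> X" using cdd unfolding cdd_symmetric_def by blast
lemma dense_domA: "dense_in X ipX domA" using cdd unfolding cdd_symmetric_def by (elim conjE) assumption
lemma domA_X: "x\<in>domA \<Longrightarrow> x \<in> X" using dense_domA unfolding dense_in_def by blast
lemma A_closed: "(\<And>n. s n \<in> domA) \<Longrightarrow> f \<in> X \<Longrightarrow> h \<in> X \<Longrightarrow>
   (\<lambda>n. gr_norm ipX (s n - f) (A (s n) - h)) \<longlonglongrightarrow> 0 \<Longrightarrow> f \<in> domA \<and> A f = h"
proof -
  have c: "\<forall>s f h. (\<forall>n. s n \<in> domA) \<and> f \<in> X \<and> h \<in> X \<and>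
              (\<lambda>n. gr_norm ipX (s n - f) (A (s n) - h)) \<longlonglongrightarrow> 0 \<longrightarrow> f \<in> domA \<and> A f = h"
    using cdd unfolding cdd_symmetric_def by (elim conjE) assumption
  show "(\<And>n. s n \<in> domA) \<Longrightarrow> f \<in> X \<Longrightarrow> h \<in> X \<Longrightarrow>
   (\<lambda>n. gr_norm ipX (s n - f) (A (s n) - h)) \<longlonglongrightarrow> 0 \<Longrightarrow> f \<in> domA \<and> A f = h"
    using c by blast
qed
lemma A_sym: "f\<in>domA \<Longrightarrow> g\<in>domA \<Longrightarrow> ipX (A f) g = ipX f (A g)"
  using cdd unfolding cdd_symmetric_def by blast

lemma domA_0: "0 \<in> domA" using domA_sub X.subspace_0 by blast
lemma domA_add: "x\<in>domA \<Longrightarrow> y\<in>domA \<Longrightarrow> x + y \<in> domA" using domA_sub X.subspace_add by blast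
lemma domA_diff: "x\<in>domA \<Longrightarrow> y\<in>domA \<Longrightarrow> x - y \<in> domA" using domA_sub X.subspace_diff by blast
lemma domA_scale: "x\<in>domA \<Longrightarrow> scX c x \<in> domA" using domA_sub X.subspace_scale by blast
lemma A_neg: "x\<in>domA \<Longrightarrow> A (- x) = - A x"
  using A_scale[of x "-1"] by simp
lemma A_diff: "x\<in>domA \<Longrightarrow> y\<in>domA \<Longrightarrow> A (x - y) = A x - A y"
  using A_add[of x "- y"] A_neg[of y] domA_sub X.subspace_neg[of domA y] by simp

lemma dense_uniq:
  assumes h1: "h1 \<in> X" and h2: "h2 \<in> X" and eq: "\<And>f. f\<in>domA \<Longrightarrow> ipX f h1 = ipX f h2"
  shows "h1 = h2"
proof -
  define v where "v = h1 - h2"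
  have v: "v \<in> X" using X.mem_diff[OF h1 h2] v_def by simp
  have orth: "ipX f v = 0" if "f\<in>domA" for f
    using eq[OF that] X.ipR(7)[OF domA_X[OF that] h1 h2] v_def by simp
  have "ip_norm ipX v \<le> 0 + e" if e: "e > 0" for e
  proof -
    obtain f where f: "f \<in> domA" and fv: "ip_norm ipX (v - f) < e"
      using dense_domA v e unfolding dense_in_def by blast
    have fX: "f \<in> X" using domA_X[OF f] .
    have "ipX v v = ipX (v - f) v" using X.ipR(8)[OF v fX v] orth[OF f] by simp
    then have "complex_of_real ((ip_norm ipX v)\<^sup>2) = ipX (v - f) v" using X.ip_self[OF v] by simp
    then have "cmod (complex_of_real ((ip_norm ipX v)\<^sup>2)) = cmod (ipX (v - f) v)" by simp
    moreover have "cmod (complex_of_real ((ip_norm ipX v)\<^sup>2)) = (ip_norm ipX v)\<^sup>2"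
      by (simp only: norm_of_real abs_power2)
    ultimately have "(ip_norm ipX v)\<^sup>2 \<le> ip_norm ipX (v - f) * ip_norm ipX v"
      using X.cauchy_schwarz[OF X.mem_diff[OF v fX] v] by simp
    also have "\<dots> \<le> e * ip_norm ipX v" using fv X.norm_nonneg[OF v] by (simp add: mult_right_mono)
    finally have "(ip_norm ipX v)\<^sup>2 \<le> e * ip_norm ipX v" .
    then show ?thesis using X.norm_nonneg[OF v] e
      by (smt (verit) mult_le_cancel_right power2_eq_square)
  qed
  then have "ip_norm ipX v \<le> 0" by (rule field_le_epsilon)
  then have "v = 0" using X.norm_zero_iff[OF v] X.norm_nonneg[OF v] by simp
  then show ?thesis using v_def by simp
qed

lemma Ds_X: "g \<in> Ds \<Longrightarrow> g \<in> X" unfolding adj_dom_def by blast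

lemma adj_char: assumes g: "g \<in> Ds" shows "As g \<in> X \<and> (\<forall>f\<in>domA. ipX (A f) g = ipX f (As g))"
proof -
  obtain h where h: "h \<in> X" "\<forall>f\<in>domA. ipX (A f) g = ipX f h" using g unfolding adj_dom_def by blast
  have "\<exists>!h. h \<in> X \<and> (\<forall>f\<in>domA. ipX (A f) g = ipX f h)"
  proof (rule ex1I[of _ h])
    show "h \<in> X \<and> (\<forall>f\<in>domA. ipX (A f) g = ipX f h)" using h by blast
    fix h' assume h': "h' \<in> X \<and> (\<forall>f\<in>domA. ipX (A f) g = ipX f h')"
    show "h' = h"
    proof (rule dense_uniq)
      show "h' \<in> X" using h' by (rule conjunct1)
      show "h \<in> X" using h(1) .
      fix f assume f: "f \<in> domA"
      show "ipX f h' = ipX f h" using bspec[OF h'[THEN conjunct2] f] bspec[OF h(2) f] by simp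
    qed
  qed
  then show ?thesis unfolding adj_def by (rule theI')
qed

lemma adj_X: "g \<in> Ds \<Longrightarrow> As g \<in> X" using adj_char by blast
lemma adj_eq1: "g \<in> Ds \<Longrightarrow> f\<in>domA \<Longrightarrow> ipX (A f) g = ipX f (As g)" using adj_char by blast

lemma adj_eq: assumes "g \<in> X" "h \<in> X" "\<And>f. f\<in>domA \<Longrightarrow> ipX (A f) g = ipX f h"
  shows "g \<in> Ds" "As g = h"
proof -
  show g: "g \<in> Ds" unfolding adj_dom_def using assms by blast
  show "As g = h" using dense_uniq[OF adj_X[OF g] assms(2)] adj_eq1[OF g] assms(3) by simp
qed

lemma domA_Ds: "f \<in> domA \<Longrightarrow> f \<in> Ds" "f \<in> domA \<Longrightarrow> As f = A f"
  using adj_eq[OF domA_X A_X] A_sym by auto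

lemma G_lin: "lin_on scX sc Ds G" using rt unfolding reduction_tuple_def by (elim conjE) assumption
lemma Ds_sub: "module.subspace scX Ds" using G_lin unfolding lin_on_def by (elim conjE) assumption
lemma G_add: "x\<in>Ds \<Longrightarrow> y\<in>Ds \<Longrightarrow> G (x + y) = G x + G y" using G_lin unfolding lin_on_def by blast
lemma G_scale: "x\<in>Ds \<Longrightarrow> G (scX c x) = sc c (G x)" using G_lin unfolding lin_on_def by blast
lemma G_img: "G ` Ds = Hmp" using rt unfolding reduction_tuple_def by (elim conjE) assumption
lemma G_Hm: "x\<in>Ds \<Longrightarrow> G x \<in> Hmp" using G_img by blast
lemma W_lh: "lin_homeo sc Hmp ipmp Hpm ippm W" using rt unfolding reduction_tuple_def by (elim conjE) assumption
lemma W_lin: "lin_on sc sc Hmp W" using W_lh unfolding lin_homeo_def by (elim conjE) assumption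
lemma W_add: "x\<in>Hmp \<Longrightarrow> y\<in>Hmp \<Longrightarrow> W (x + y) = W x + W y" using W_lin unfolding lin_on_def by blast
lemma W_scale: "x\<in>Hmp \<Longrightarrow> W (sc c x) = sc c (W x)" using W_lin unfolding lin_on_def by blast
lemma W_bij: "bij_betw W Hmp Hpm" using W_lh unfolding lin_homeo_def by (elim conjE) assumption
lemma W_cont: "continuous_betw Hmp ipmp Hpm ippm W" using W_lh unfolding lin_homeo_def by (elim conjE) assumption
lemma Winv_cont: "continuous_betw Hpm ippm Hmp ipmp (inv_into Hmp W)" using W_lh unfolding lin_homeo_def by (elim conjE) assumption
lemma W_Hp: "x\<in>Hmp \<Longrightarrow> W x \<in> Hpm" using W_bij bij_betwE by blast
lemma R3: "f\<in>Ds \<Longrightarrow> g\<in>Ds \<Longrightarrow> ipX (As f) g - ipX f (As g) = p (G f) (W (G g))"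
  using rt unfolding reduction_tuple_def by blast
lemma W_neg: "x\<in>Hmp \<Longrightarrow> W (- x) = - W x" using W_scale[of x "-1"] by simp

lemma Hp_surj: "k \<in> Hpm \<Longrightarrow> \<exists>g\<in>Ds. k = W (G g)"
  using W_bij G_img unfolding bij_betw_def by blast

lemma p_sesq: "sesq_on sc Hmp Hpm p" using hp unfolding is_H_pairing_def by (elim conjE) assumption
lemmas pR = sesq_props[OF vs p_sesq Hm.sub Hp.sub]
lemma p_ext: "g\<in>H \<inter> Hmp \<Longrightarrow> h\<in>H \<inter> Hpm \<Longrightarrow> p g h = ipH g h" using hp unfolding is_H_pairing_def by blast
lemma p_bound: "\<exists>C\<ge>0. \<forall>x\<in>Hmp. \<forall>y\<in>Hpm. cmod (p x y) \<le> C * ip_norm ipmp x * ip_norm ippm y"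
proof -
  obtain C where C: "\<forall>x\<in>Hmp. \<forall>y\<in>Hpm. cmod (p x y) \<le> C * ip_norm ipmp x * ip_norm ippm y"
    using hp unfolding is_H_pairing_def by (elim conjE exE) blast
  have "cmod (p x y) \<le> max C 0 * ip_norm ipmp x * ip_norm ippm y" if "x\<in>Hmp" "y\<in>Hpm" for x y
  proof -
    have "C * ip_norm ipmp x * ip_norm ippm y \<le> max C 0 * ip_norm ipmp x * ip_norm ippm y"
      using Hm.norm_nonneg[OF that(1)] Hp.norm_nonneg[OF that(2)]
      by (intro mult_right_mono) auto
    then show ?thesis using C that by fastforce
  qed
  then show ?thesis by (intro exI[of _ "max C 0"]) auto
qed

definition Cp where "Cp = (SOME C. C \<ge> 0 \<and> (\<forall>x\<in>Hmp. \<forall>y\<in>Hpm. cmod (p x y) \<le> C * ip_norm ipmp x * ip_norm ippm y))"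
lemma Cp: "Cp \<ge> 0" "x\<in>Hmp \<Longrightarrow> y\<in>Hpm \<Longrightarrow> cmod (p x y) \<le> Cp * ip_norm ipmp x * ip_norm ippm y"
  using someI_ex[OF p_bound] unfolding Cp_def by blast+

lemma md1: "dense_in Hmp ipmp (H \<inter> Hmp)" using md unfolding mixed_duality_def by (elim conjE) assumption
lemma md2: "dense_in Hpm ippm (H \<inter> Hpm)" using md unfolding mixed_duality_def by (elim conjE) assumption
lemma md3: "dual_norm_cond ipH (H \<inter> Hmp) ipmp (H \<inter> Hpm) ippm" using md unfolding mixed_duality_def by (elim conjE) assumption
lemma md4: "dual_norm_cond ipH (H \<inter> Hpm) ippm (H \<inter> Hmp) ipmp" using md unfolding mixed_duality_def by (elim conjE) assumption
lemmas md_parts = md1 md2 md3 md4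

lemma dual_mp: assumes x: "x \<in> Hmp" and K0: "K \<ge> 0" and K: "\<And>k. k\<in>Hpm \<Longrightarrow> cmod (p x k) \<le> K * ip_norm ippm k"
  shows "ip_norm ipmp x \<le> K"
proof (rule dual_bound[OF vs hHm hHp md_parts(1) md_parts(4), where q = p and C = Cp])
  show "\<And>x z y. x \<in> Hmp \<Longrightarrow> z \<in> Hmp \<Longrightarrow> y \<in> Hpm \<Longrightarrow> p (x - z) y = p x y - p z y" using pR(8) by blast
  show "\<And>x y. x \<in> Hmp \<Longrightarrow> y \<in> Hpm \<Longrightarrow> cmod (p x y) \<le> Cp * ip_norm ipmp x * ip_norm ippm y" using Cp(2) by blast
  show "cmod (ipH g h) = cmod (p h g)" if "g \<in> H \<inter> Hpm" "h \<in> H \<inter> Hmp" for g h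
  proof -
    have "p h g = ipH h g" using p_ext that by blast
    moreover have "ipH g h = cnj (ipH h g)" using HH.conj_sym that by blast
    ultimately show ?thesis by simp
  qed
qed (use x K0 K in auto)

lemma dual_pm: assumes k: "k \<in> Hpm" and K0: "K \<ge> 0" and K: "\<And>x. x\<in>Hmp \<Longrightarrow> cmod (p x k) \<le> K * ip_norm ipmp x"
  shows "ip_norm ippm k \<le> K"
proof (rule dual_bound[OF vs hHp hHm md_parts(2) md_parts(3), where q = "\<lambda>a b. p b a" and C = Cp])
  show "\<And>x z y. x \<in> Hpm \<Longrightarrow> z \<in> Hpm \<Longrightarrow> y \<in> Hmp \<Longrightarrow> p y (x - z) = p y x - p y z" using pR(7) by blast
  show "\<And>x y. x \<in> Hpm \<Longrightarrow> y \<in> Hmp \<Longrightarrow> cmod (p y x) \<le> Cp * ip_norm ippm x * ip_norm ipmp y"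
    using Cp(2) by (simp add: mult.commute mult.left_commute)
  show "cmod (ipH g h) = cmod (p g h)" if "g \<in> H \<inter> Hmp" "h \<in> H \<inter> Hpm" for g h
    using p_ext that by simp
qed (use k K0 K in auto)

lemma nondeg1: "x \<in> Hmp \<Longrightarrow> (\<And>k. k\<in>Hpm \<Longrightarrow> p x k = 0) \<Longrightarrow> x = 0"
  using dual_mp[of x 0] Hm.norm_zero_iff Hm.norm_nonneg by force
lemma nondeg2: "k \<in> Hpm \<Longrightarrow> (\<And>x. x\<in>Hmp \<Longrightarrow> p x k = 0) \<Longrightarrow> k = 0"
  using dual_pm[of k 0] Hp.norm_zero_iff Hp.norm_nonneg by force

definition omega where "omega f g = ipX (As f) g - ipX f (As g)"

lemma omega_antisym: "f\<in>Ds \<Longrightarrow> g\<in>Ds \<Longrightarrow> cnj (omega g f) = - omega f g"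
  unfolding omega_def using X.conj_sym adj_X Ds_X by (metis complex_cnj_diff minus_diff_eq)

lemma p_antisym: "a\<in>Hmp \<Longrightarrow> b\<in>Hmp \<Longrightarrow> cnj (p a (W b)) = - p b (W a)"
proof -
  assume a: "a\<in>Hmp" and b: "b\<in>Hmp"
  obtain g where g: "g\<in>Ds" "a = G g" using a G_img by blast
  obtain f where f: "f\<in>Ds" "b = G f" using b G_img by blast
  show ?thesis using omega_antisym[OF f(1) g(1)] R3[OF f(1) g(1)] R3[OF g(1) f(1)] g f
    unfolding omega_def by simp
qed

end

context setting
begin

lemma sharp_eq: assumes x: "x\<in>Hmp" shows "sharp Hmp Hpm p W x = - W x"
proof -
  define V0 where "V0 = (\<lambda>x. if x\<in>Hmp then - W x else 0)"
  have P: "(\<forall>x. x\<notin>Hmp \<longrightarrow> V0 x = 0) \<and> (\<forall>x\<in>Hmp. V0 x \<in> Hpm) \<and> (\<forall>f\<in>Hmp. \<forall>g\<in>Hmp. cnj (p g (W f)) = p f (V0 g))"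
  proof (intro conjI ballI allI impI)
    show "V0 x = 0" if "x \<notin> Hmp" for x using that unfolding V0_def by simp
    show "V0 x \<in> Hpm" if "x \<in> Hmp" for x using that W_Hp Hp.mem_neg unfolding V0_def by simp
    show "cnj (p g (W f)) = p f (V0 g)" if "f \<in> Hmp" "g \<in> Hmp" for f g
      using that p_antisym[OF that(2) that(1)] pR(5)[OF that(1) W_Hp[OF that(2)]] unfolding V0_def by simp
  qed
  have U: "V = V0" if V: "(\<forall>x. x\<notin>Hmp \<longrightarrow> V x = 0) \<and> (\<forall>x\<in>Hmp. V x \<in> Hpm) \<and> (\<forall>f\<in>Hmp. \<forall>g\<in>Hmp. cnj (p g (W f)) = p f (V g))" for V
  proof (rule ext)
    fix g show "V g = V0 g"
    proof (cases "g\<in>Hmp")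
      case False then show ?thesis using V unfolding V0_def by simp
    next
      case True
      have Vg: "V g \<in> Hpm" using V True by blast
      have V0g: "V0 g \<in> Hpm" using P True by blast
      have "V g - V0 g = 0"
      proof (rule nondeg2)
        show "V g - V0 g \<in> Hpm" using Hp.mem_diff[OF Vg V0g] .
        fix f assume f: "f\<in>Hmp"
        have "p f (V g) = cnj (p g (W f))" using V f True by auto
        moreover have "p f (V0 g) = cnj (p g (W f))" using P f True by auto
        ultimately show "p f (V g - V0 g) = 0" using pR(7)[OF f Vg V0g] by simp
      qed
      then show ?thesis by simp
    qed
  qed
  have "sharp Hmp Hpm p W = V0" unfolding sharp_def
    by (rule the_equality[where P = "\<lambda>V. (\<forall>x. x\<notin>Hmp \<longrightarrow> V x = 0) \<and> (\<forall>x\<in>Hmp. V x \<in> Hpm) \<and> (\<forall>f\<in>Hmp. \<forall>g\<in>Hmp. cnj (p g (W f)) = p f (V g))", OF P U])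
  then show ?thesis using x V0_def by simp
qed

lemma domA_ker: assumes f: "f\<in>domA" shows "G f = 0"
proof (rule nondeg1)
  show "G f \<in> Hmp" using G_Hm domA_Ds(1)[OF f] by blast
  fix k assume k: "k \<in> Hpm"
  obtain g where g: "g \<in> Ds" "k = W (G g)" using Hp_surj[OF k] by blast
  show "p (G f) k = 0" using R3[OF domA_Ds(1)[OF f] g(1)] g(2) domA_Ds(2)[OF f] adj_eq1[OF g(1) f] by simp
qed

abbreviation "Wi \<equiv> inv_into Hmp W"

lemma Wi_Hm: "k\<in>Hpm \<Longrightarrow> Wi k \<in> Hmp" using bij_betw_inv_into[OF W_bij] bij_betwE by blast
lemma W_Wi: "k\<in>Hpm \<Longrightarrow> W (Wi k) = k" using bij_betw_inv_into_right[OF W_bij] by blast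
lemma Wi_W: "a\<in>Hmp \<Longrightarrow> Wi (W a) = a" using bij_betw_inv_into_left[OF W_bij] by blast
lemma Wi_add: "k\<in>Hpm \<Longrightarrow> l\<in>Hpm \<Longrightarrow> Wi (k + l) = Wi k + Wi l"
proof -
  assume k: "k\<in>Hpm" and l: "l\<in>Hpm"
  have "k + l = W (Wi k + Wi l)" using W_add[OF Wi_Hm[OF k] Wi_Hm[OF l]] W_Wi[OF k] W_Wi[OF l] by simp
  then show ?thesis using Wi_W[OF Hm.mem_add[OF Wi_Hm[OF k] Wi_Hm[OF l]]] by simp
qed
lemma Wi_scale: "k\<in>Hpm \<Longrightarrow> Wi (sc c k) = sc c (Wi k)"
proof -
  assume k: "k\<in>Hpm"
  have "sc c k = W (sc c (Wi k))" using W_scale[OF Wi_Hm[OF k]] W_Wi[OF k] by simp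
  then show ?thesis using Wi_W[OF Hm.mem_scale[OF Wi_Hm[OF k]]] by simp
qed

lemma part2: assumes c: "cmod c = 1"
  shows "reduction_tuple scX X ipX domA A sc Hpm ippm Hmp ipmp (\<lambda>a b. cnj (p b a))
             (\<lambda>f. sc c (W (G f))) (\<lambda>x. - inv_into Hmp W x)"
proof -
  define G2 where "G2 = (\<lambda>f. sc c (W (G f)))"
  define W2 where "W2 = (\<lambda>x. - inv_into Hmp W x)"
  have c0: "c \<noteq> 0" using c by auto
  have cc: "cnj c * c = 1"
  proof -
    have "cnj c * c = complex_of_real ((cmod c)\<^sup>2)" by (subst mult.commute) (rule complex_norm_square[symmetric])
    then show ?thesis using c by simp
  qed
  have G2_Hp: "f\<in>Ds \<Longrightarrow> G2 f \<in> Hpm" for f unfolding G2_def using Hp.mem_scale W_Hp G_Hm by blast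
  have a: "lin_on scX sc Ds G2"
    unfolding lin_on_def
  proof (intro conjI ballI allI)
    show "module.subspace scX Ds" by (rule Ds_sub)
    show "G2 (x + y) = G2 x + G2 y" if "x\<in>Ds" "y\<in>Ds" for x y
      unfolding G2_def using G_add[OF that] W_add[OF G_Hm[OF that(1)] G_Hm[OF that(2)]]
      by (simp add: Hm.scale_right_distrib)
    show "G2 (scX d x) = sc d (G2 x)" if "x\<in>Ds" for x d
      unfolding G2_def using G_scale[OF that] W_scale[OF G_Hm[OF that]]
      by (simp add: Hm.scale_left_commute)
  qed
  have b: "G2 ` Ds = Hpm"
  proof
    show "G2 ` Ds \<subseteq> Hpm" using G2_Hp by blast
    show "Hpm \<subseteq> G2 ` Ds"
    proof
      fix k assume k: "k\<in>Hpm"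
      obtain g where g: "g\<in>Ds" "sc (inverse c) k = W (G g)" using Hp_surj[OF Hp.mem_scale[OF k]] by blast
      have "G2 g = sc c (sc (inverse c) k)" unfolding G2_def using g by simp
      also have "\<dots> = k" using c0 by simp
      finally show "k \<in> G2 ` Ds" using g(1) by (metis image_eqI)
    qed
  qed
  have W2_Hm: "k\<in>Hpm \<Longrightarrow> W2 k \<in> Hmp" for k unfolding W2_def using Hm.mem_neg Wi_Hm by blast
  have inj2: "inj_on W2 Hpm"
  proof (rule inj_onI)
    fix x y assume x: "x\<in>Hpm" and y: "y\<in>Hpm" and e: "W2 x = W2 y"
    then have "Wi x = Wi y" unfolding W2_def by simp
    then show "x = y" using W_Wi[OF x] W_Wi[OF y] by metis
  qed
  have W2inv: "inv_into Hpm W2 a = W (- a)" if a: "a\<in>Hmp" for a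
  proof (rule inv_into_f_eq[OF inj2])
    show "W (- a) \<in> Hpm" using W_Hp Hm.mem_neg a by blast
    show "W2 (W (- a)) = a" unfolding W2_def using Wi_W[OF Hm.mem_neg[OF a]] by simp
  qed
  have nn: "ip_norm ipmp (- u - - v) = ip_norm ipmp (u - v)" if "u\<in>Hmp" "v\<in>Hmp" for u v
    using Hm.norm_commute[OF that] by (simp add: diff_minus_eq_add add.commute)
  have nnp: "ip_norm ippm (- u - - v) = ip_norm ipmp (u - v) \<Longrightarrow> True" for u v by simp
  have c1: "lin_on sc sc Hpm W2"
    unfolding lin_on_def
  proof (intro conjI ballI allI)
    show "module.subspace sc Hpm" by (rule Hp.sub)
    show "W2 (x + y) = W2 x + W2 y" if "x\<in>Hpm" "y\<in>Hpm" for x y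
      unfolding W2_def using Wi_add[OF that] by simp
    show "W2 (sc d x) = sc d (W2 x)" if "x\<in>Hpm" for x d
      unfolding W2_def using Wi_scale[OF that] by simp
  qed
  have c2: "bij_betw W2 Hpm Hmp"
    unfolding bij_betw_def
  proof
    show "inj_on W2 Hpm" by (rule inj2)
    show "W2 ` Hpm = Hmp"
    proof
      show "W2 ` Hpm \<subseteq> Hmp" using W2_Hm by blast
      show "Hmp \<subseteq> W2 ` Hpm"
      proof
        fix a assume a: "a\<in>Hmp"
        have "W (- a) \<in> Hpm" using W_Hp Hm.mem_neg a by blast
        moreover have "W2 (W (- a)) = a" unfolding W2_def using Wi_W[OF Hm.mem_neg[OF a]] by simp
        ultimately show "a \<in> W2 ` Hpm" by (metis image_eqI)
      qed
    qed
  qed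
  have c3: "continuous_betw Hpm ippm Hmp ipmp W2"
    unfolding continuous_betw_def
  proof (intro ballI allI impI)
    fix x and e :: real assume x: "x\<in>Hpm" and e: "e > 0"
    obtain d where d: "d > 0" "\<forall>y\<in>Hpm. ip_norm ippm (y - x) < d \<longrightarrow> ip_norm ipmp (Wi y - Wi x) < e"
      using Winv_cont x e unfolding continuous_betw_def by blast
    show "\<exists>d>0. \<forall>y\<in>Hpm. ip_norm ippm (y - x) < d \<longrightarrow> ip_norm ipmp (W2 y - W2 x) < e"
    proof (intro exI[of _ d] conjI ballI impI)
      fix y assume y: "y\<in>Hpm" and yx: "ip_norm ippm (y - x) < d"
      have "ip_norm ipmp (W2 y - W2 x) = ip_norm ipmp (Wi y - Wi x)"
        unfolding W2_def using nn[OF Wi_Hm[OF y] Wi_Hm[OF x]] Hm.norm_commute[OF Wi_Hm[OF x] Wi_Hm[OF y]] by simp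
      then show "ip_norm ipmp (W2 y - W2 x) < e" using d y yx by simp
    qed (use d in simp)
  qed
  have c4: "continuous_betw Hmp ipmp Hpm ippm (inv_into Hpm W2)"
    unfolding continuous_betw_def
  proof (intro ballI allI impI)
    fix x and e :: real assume x: "x\<in>Hmp" and e: "e > 0"
    have mx: "- x \<in> Hmp" using Hm.mem_neg[OF x] .
    obtain d where d: "d > 0" "\<forall>y\<in>Hmp. ip_norm ipmp (y - - x) < d \<longrightarrow> ip_norm ippm (W y - W (- x)) < e"
      using W_cont mx e unfolding continuous_betw_def by blast
    show "\<exists>d>0. \<forall>y\<in>Hmp. ip_norm ipmp (y - x) < d \<longrightarrow> ip_norm ippm (inv_into Hpm W2 y - inv_into Hpm W2 x) < e"
    proof (intro exI[of _ d] conjI ballI impI)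
      fix y assume y: "y\<in>Hmp" and yx: "ip_norm ipmp (y - x) < d"
      have "ip_norm ipmp (- y - - x) = ip_norm ipmp (y - x)" using nn[OF y x] .
      then have "ip_norm ippm (W (- y) - W (- x)) < e" using d Hm.mem_neg[OF y] yx by simp
      then show "ip_norm ippm (inv_into Hpm W2 y - inv_into Hpm W2 x) < e" using W2inv[OF x] W2inv[OF y] by simp
    qed (use d in simp)
  qed
  have d: "ipX (As f) g - ipX f (As g) = cnj (p (W2 (G2 g)) (G2 f))" if f: "f\<in>Ds" and g: "g\<in>Ds" for f g
  proof -
    have Gg: "G g \<in> Hmp" and Gf: "G f \<in> Hmp" using G_Hm f g by auto
    have "Wi (sc c (W (G g))) = sc c (G g)"
      using W_scale[OF Gg] Wi_W[OF Hm.mem_scale[OF Gg]] by simp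
    then have W2G2: "W2 (G2 g) = - sc c (G g)" unfolding W2_def G2_def by simp
    have "p (W2 (G2 g)) (G2 f) = p (- sc c (G g)) (sc c (W (G f)))" using W2G2 unfolding G2_def by simp
    also have "\<dots> = - (cnj c * (c * p (G g) (W (G f))))"
      using pR(6)[OF Hm.mem_scale[OF Gg] Hp.mem_scale[OF W_Hp[OF Gf]]]
        pR(4)[OF Gg Hp.mem_scale[OF W_Hp[OF Gf]]] pR(2)[OF Gg W_Hp[OF Gf]] by simp
    also have "\<dots> = - p (G g) (W (G f))" using cc by (simp add: mult.assoc[symmetric])
    finally have "cnj (p (W2 (G2 g)) (G2 f)) = - cnj (p (G g) (W (G f)))" by simp
    also have "\<dots> = p (G f) (W (G g))" using p_antisym[OF Gg Gf] by simp
    finally show ?thesis using R3[OF f g] by simp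
  qed
  show ?thesis
    unfolding reduction_tuple_def lin_homeo_def G2_def[symmetric] W2_def[symmetric]
    using a b c1 c2 c3 c4 d by blast
qed

end

context setting
begin

lemma gr_tendsto: "(\<lambda>n. ip_norm ipX (u n)) \<longlonglongrightarrow> 0 \<Longrightarrow> (\<lambda>n. ip_norm ipX (v n)) \<longlonglongrightarrow> 0
   \<Longrightarrow> (\<And>n. u n \<in> X) \<Longrightarrow> (\<And>n. v n \<in> X) \<Longrightarrow> (\<lambda>n. gr_norm ipX (u n) (v n)) \<longlonglongrightarrow> 0"
proof -
  assume u: "(\<lambda>n. ip_norm ipX (u n)) \<longlonglongrightarrow> 0" and v: "(\<lambda>n. ip_norm ipX (v n)) \<longlonglongrightarrow> 0"
    and uX: "\<And>n. u n \<in> X" and vX: "\<And>n. v n \<in> X"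
  have b: "\<forall>n. norm (gr_norm ipX (u n) (v n)) \<le> ip_norm ipX (u n) + ip_norm ipX (v n)"
  proof
    fix n
    have "norm (gr_norm ipX (u n) (v n)) = gr_norm ipX (u n) (v n)" unfolding gr_norm_def by simp
    also have "\<dots> \<le> \<bar>ip_norm ipX (u n)\<bar> + \<bar>ip_norm ipX (v n)\<bar>" unfolding gr_norm_def by (rule sqrt_sum_squares_le_sum_abs)
    finally show "norm (gr_norm ipX (u n) (v n)) \<le> ip_norm ipX (u n) + ip_norm ipX (v n)"
      using X.norm_nonneg[OF uX[of n]] X.norm_nonneg[OF vX[of n]] by simp
  qed
  have "(\<lambda>n. ip_norm ipX (u n) + ip_norm ipX (v n)) \<longlonglongrightarrow> 0" using tendsto_add_zero[OF u v] .
  then show ?thesis by (rule Lim_null_comparison[OF always_eventually[OF b]])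
qed

lemma gr_tendsto_D: "(\<lambda>n. gr_norm ipX (u n) (v n)) \<longlonglongrightarrow> 0 \<Longrightarrow> (\<And>n. u n \<in> X) \<Longrightarrow> (\<And>n. v n \<in> X)
   \<Longrightarrow> (\<lambda>n. ip_norm ipX (u n)) \<longlonglongrightarrow> 0 \<and> (\<lambda>n. ip_norm ipX (v n)) \<longlonglongrightarrow> 0"
proof -
  assume g: "(\<lambda>n. gr_norm ipX (u n) (v n)) \<longlonglongrightarrow> 0" and uX: "\<And>n. u n \<in> X" and vX: "\<And>n. v n \<in> X"
  have b1: "\<forall>n. norm (ip_norm ipX (u n)) \<le> gr_norm ipX (u n) (v n)"
    using X.norm_nonneg[OF uX] unfolding gr_norm_def by simp
  have b2: "\<forall>n. norm (ip_norm ipX (v n)) \<le> gr_norm ipX (u n) (v n)"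
    using X.norm_nonneg[OF vX] unfolding gr_norm_def by simp
  show ?thesis using Lim_null_comparison[OF always_eventually[OF b1] g] Lim_null_comparison[OF always_eventually[OF b2] g]
    by simp
qed

lemma two_scale: "scX 2 y = y + y" using X.scale_left_distrib[of 1 1 y] by simp

lemma vN:
  assumes f: "f \<in> Ds" and sym: "\<And>g. g\<in>Ds \<Longrightarrow> ipX (As f) g = ipX f (As g)"
  shows "f \<in> domA"
proof -
  define h0 where "h0 = As f"
  have fX: "f\<in>X" using Ds_X[OF f] .
  have h0X: "h0\<in>X" using adj_X[OF f] h0_def by simp
  define Q where "Q a = (ip_norm ipX (f - a))\<^sup>2 + (ip_norm ipX (h0 - A a))\<^sup>2" for a
  define d where "d = Inf (Q ` domA)"
  have bdd: "bdd_below (Q ` domA)" by (rule bdd_belowI[of _ 0]) (auto simp: Q_def)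
  have ne: "Q ` domA \<noteq> {}" using domA_0 by blast
  have dle: "d \<le> Q a" if "a \<in> domA" for a unfolding d_def using cInf_lower[OF imageI[OF that] bdd] .
  have "\<forall>n. \<exists>x. x \<in> domA \<and> Q x < d + inverse (real (Suc n))"
  proof
    fix n
    have "Inf (Q ` domA) < d + inverse (real (Suc n))" unfolding d_def by simp
    then obtain y where "y \<in> Q ` domA" "y < d + inverse (real (Suc n))" using cInf_lessD[OF ne] by blast
    then show "\<exists>x. x \<in> domA \<and> Q x < d + inverse (real (Suc n))" by blast
  qed
  from choice[OF this] obtain a where a: "\<And>n. a n \<in> domA" "\<And>n. Q (a n) < d + inverse (real (Suc n))" by blast
  have aX: "a n \<in> X" for n using domA_X[OF a(1)] .
  have AaX: "A (a n) \<in> X" for n using A_X[OF a(1)] .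
  have par: "(ip_norm ipX (x - y))\<^sup>2 + (ip_norm ipX (A x - A y))\<^sup>2 \<le> 2 * Q x + 2 * Q y - 4 * d"
    if x: "x\<in>domA" and y: "y\<in>domA" for x y
  proof -
    have xX: "x\<in>X" and yX: "y\<in>X" and AxX: "A x \<in> X" and AyX: "A y \<in> X" using domA_X A_X x y by auto
    define m where "m = scX (1/2) (x + y)"
    have m: "m \<in> domA" unfolding m_def using domA_scale domA_add x y by blast
    have Am: "A m = scX (1/2) (A x + A y)" unfolding m_def using A_scale A_add x y domA_add by simp
    have e1: "(f - x) + (f - y) = scX 2 (f - m)"
      unfolding m_def by (simp add: X.scale_right_diff_distrib two_scale algebra_simps)
    have e2: "(h0 - A x) + (h0 - A y) = scX 2 (h0 - A m)"
      unfolding Am by (simp add: X.scale_right_diff_distrib two_scale algebra_simps)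
    have fm: "f - m \<in> X" using X.mem_diff[OF fX domA_X[OF m]] .
    have hm: "h0 - A m \<in> X" using X.mem_diff[OF h0X A_X[OF m]] .
    have fx: "f - x \<in> X" "f - y \<in> X" "h0 - A x \<in> X" "h0 - A y \<in> X"
      using X.mem_diff fX h0X xX yX AxX AyX by auto
    have p1: "(ip_norm ipX (f - x + (f - y)))\<^sup>2 + (ip_norm ipX (f - x - (f - y)))\<^sup>2
       = 2 * (ip_norm ipX (f - x))\<^sup>2 + 2 * (ip_norm ipX (f - y))\<^sup>2" using X.parallelogram[OF fx(1) fx(2)] .
    have p2: "(ip_norm ipX (h0 - A x + (h0 - A y)))\<^sup>2 + (ip_norm ipX (h0 - A x - (h0 - A y)))\<^sup>2
       = 2 * (ip_norm ipX (h0 - A x))\<^sup>2 + 2 * (ip_norm ipX (h0 - A y))\<^sup>2" using X.parallelogram[OF fx(3) fx(4)] .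
    have n1: "ip_norm ipX (f - x + (f - y)) = 2 * ip_norm ipX (f - m)" unfolding e1 using X.norm_scale[OF fm, of 2] by simp
    have n2: "ip_norm ipX (h0 - A x + (h0 - A y)) = 2 * ip_norm ipX (h0 - A m)" unfolding e2 using X.norm_scale[OF hm, of 2] by simp
    have n3: "ip_norm ipX (f - x - (f - y)) = ip_norm ipX (x - y)" using X.norm_commute[OF yX xX] by simp
    have n4: "ip_norm ipX (h0 - A x - (h0 - A y)) = ip_norm ipX (A x - A y)" using X.norm_commute[OF AyX AxX] by simp
    have "4 * d \<le> 4 * Q m" using dle[OF m] by simp
    then show ?thesis using p1 p2 unfolding n1 n2 n3 n4 Q_def by (simp add: power_mult_distrib)
  qed
  have cauchy: "\<exists>N. \<forall>m\<ge>N. \<forall>n\<ge>N. ip_norm ipX (a m - a n) < e \<and> ip_norm ipX (A (a m) - A (a n)) < e"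
    if e: "e > 0" for e
  proof -
    obtain N where N: "4 / e\<^sup>2 < real N" using reals_Archimedean2 by blast
    have "ip_norm ipX (a m - a n) < e \<and> ip_norm ipX (A (a m) - A (a n)) < e" if "m \<ge> N" "n \<ge> N" for m n
    proof -
      have im: "inverse (real (Suc m)) \<le> inverse (real (Suc N))" and in': "inverse (real (Suc n)) \<le> inverse (real (Suc N))"
        using that by (auto simp: field_simps)
      have "inverse (real (Suc N)) < e\<^sup>2 / 4"
      proof -
        have "4 / e\<^sup>2 < real (Suc N)" using N by simp
        then have "4 < e\<^sup>2 * real (Suc N)" using e by (simp add: field_simps)
        then show ?thesis using e by (simp add: field_simps)
      qed
      then have "2 * Q (a m) + 2 * Q (a n) - 4 * d < e\<^sup>2"
        using a(2)[of m] a(2)[of n] im in' by linarith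
      then have "(ip_norm ipX (a m - a n))\<^sup>2 < e\<^sup>2" "(ip_norm ipX (A (a m) - A (a n)))\<^sup>2 < e\<^sup>2"
        using par[OF a(1) a(1), of m n] by (smt (verit) zero_le_power2)+
      then show ?thesis using e by (auto intro: power_less_imp_less_base)
    qed
    then show ?thesis by blast
  qed
  have ca1: "\<forall>e>0. \<exists>N. \<forall>m\<ge>N. \<forall>n\<ge>N. ip_norm ipX (a m - a n) < e"
  proof (intro allI impI)
    fix e :: real assume "e > 0"
    then obtain N where N: "\<forall>m\<ge>N. \<forall>n\<ge>N. ip_norm ipX (a m - a n) < e \<and> ip_norm ipX (A (a m) - A (a n)) < e"
      using cauchy by blast
    show "\<exists>N. \<forall>m\<ge>N. \<forall>n\<ge>N. ip_norm ipX (a m - a n) < e" using N by blast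
  qed
  have ca2: "\<forall>e>0. \<exists>N. \<forall>m\<ge>N. \<forall>n\<ge>N. ip_norm ipX (A (a m) - A (a n)) < e"
  proof (intro allI impI)
    fix e :: real assume "e > 0"
    then obtain N where N: "\<forall>m\<ge>N. \<forall>n\<ge>N. ip_norm ipX (a m - a n) < e \<and> ip_norm ipX (A (a m) - A (a n)) < e"
      using cauchy by blast
    show "\<exists>N. \<forall>m\<ge>N. \<forall>n\<ge>N. ip_norm ipX (A (a m) - A (a n)) < e" using N by blast
  qed
  have aX': "\<forall>n. a n \<in> X" using aX by blast
  have AaX': "\<forall>n. A (a n) \<in> X" using AaX by blast
  obtain ainf where ainf: "ainf \<in> X" "(\<lambda>n. ip_norm ipX (a n - ainf)) \<longlonglongrightarrow> 0"
    using X.complete[OF aX' ca1] by blast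
  obtain hinf where hinf: "hinf \<in> X" "(\<lambda>n. ip_norm ipX (A (a n) - hinf)) \<longlonglongrightarrow> 0"
    using X.complete[OF AaX' ca2] by blast
  have "(\<lambda>n. gr_norm ipX (a n - ainf) (A (a n) - hinf)) \<longlonglongrightarrow> 0"
    by (rule gr_tendsto[OF ainf(2) hinf(2)]) (use X.mem_diff aX AaX ainf hinf in auto)
  then have ai: "ainf \<in> domA" "A ainf = hinf" using A_closed[OF a(1) ainf(1) hinf(1)] by auto
  have t1: "(\<lambda>n. ip_norm ipX (f - a n)) \<longlonglongrightarrow> ip_norm ipX (f - ainf)"
  proof (rule X.norm_tendsto)
    show "f - ainf \<in> X" using X.mem_diff fX ainf by auto
    show "f - a n \<in> X" for n using X.mem_diff fX aX by auto
    have "ip_norm ipX (f - a n - (f - ainf)) = ip_norm ipX (a n - ainf)" for n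
      using X.norm_commute[OF ainf(1) aX[of n]] by simp
    then show "(\<lambda>n. ip_norm ipX (f - a n - (f - ainf))) \<longlonglongrightarrow> 0" using ainf(2) by simp
  qed
  have t2: "(\<lambda>n. ip_norm ipX (h0 - A (a n))) \<longlonglongrightarrow> ip_norm ipX (h0 - A ainf)"
  proof (rule X.norm_tendsto)
    show "h0 - A ainf \<in> X" using X.mem_diff h0X A_X ai by auto
    show "h0 - A (a n) \<in> X" for n using X.mem_diff h0X AaX by auto
    have "ip_norm ipX (h0 - A (a n) - (h0 - A ainf)) = ip_norm ipX (A (a n) - hinf)" for n
      using X.norm_commute[OF hinf(1) AaX[of n]] ai by simp
    then show "(\<lambda>n. ip_norm ipX (h0 - A (a n) - (h0 - A ainf))) \<longlonglongrightarrow> 0" using hinf(2) by simp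
  qed
  have "(\<lambda>n. Q (a n)) \<longlonglongrightarrow> Q ainf" unfolding Q_def by (intro tendsto_intros t1 t2)
  moreover have "(\<lambda>n. Q (a n)) \<longlonglongrightarrow> d"
  proof (rule tendsto_sandwich[where f = "\<lambda>n. d" and h = "\<lambda>n. d + inverse (real (Suc n))"])
    show "\<forall>\<^sub>F n in sequentially. d \<le> Q (a n)"
      by (rule always_eventually, rule allI, rule dle[OF a(1)])
    show "\<forall>\<^sub>F n in sequentially. Q (a n) \<le> d + inverse (real (Suc n))" 
    proof (rule always_eventually, rule allI)
      fix n show "Q (a n) \<le> d + inverse (real (Suc n))" using a(2)[of n] by simp
    qed
    show "(\<lambda>n. d) \<longlonglongrightarrow> d" by simp
    show "(\<lambda>n. d + inverse (real (Suc n))) \<longlonglongrightarrow> d"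
      using tendsto_add[OF tendsto_const[of d] LIMSEQ_inverse_real_of_nat] by simp
  qed
  ultimately have Qd: "Q ainf = d" by (rule LIMSEQ_unique)
  define v where "v = f - ainf"
  define w where "w = h0 - A ainf"
  have vX: "v \<in> X" unfolding v_def using X.mem_diff fX ainf by auto
  have wX: "w \<in> X" unfolding w_def using X.mem_diff h0X A_X ai by auto
  have orth: "ipX b v + ipX (A b) w = 0" if b: "b \<in> domA" for b
  proof -
    define z where "z = ipX b v + ipX (A b) w"
    have bX: "b \<in> X" and AbX: "A b \<in> X" using domA_X A_X b by auto
    define K where "K = (ip_norm ipX b)\<^sup>2 + (ip_norm ipX (A b))\<^sup>2"
    have K0: "K \<ge> 0" unfolding K_def by simp
    define s where "s = 1 / (K + 1)"
    have s0: "s > 0" unfolding s_def using K0 by simp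
    have sK: "s * K < 1" unfolding s_def using K0 by (simp add: field_simps)
    define r where "r = (cmod z)\<^sup>2"
    have r0: "r \<ge> 0" unfolding r_def by simp
    define t where "t = complex_of_real s * z"
    have Qt: "Q (ainf + scX t b) = Q ainf - 2 * Re (cnj t * z) + (cmod t)\<^sup>2 * K"
    proof -
      have tb: "ainf + scX t b \<in> domA" using domA_add domA_scale ai b by blast
      have e1: "f - (ainf + scX t b) = v - scX t b" unfolding v_def by (simp add: algebra_simps)
      have e2: "h0 - A (ainf + scX t b) = w - scX t (A b)" unfolding w_def
        using A_add[OF ai(1) domA_scale[OF b]] A_scale[OF b] by (simp add: algebra_simps)
      have q1: "(ip_norm ipX (v - scX t b))\<^sup>2 = (ip_norm ipX v)\<^sup>2 - 2 * Re (cnj t * ipX b v) + (cmod t)\<^sup>2 * (ip_norm ipX b)\<^sup>2"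
        using X.expand_sq[OF vX bX, of t] X.ip_self[OF X.mem_diff[OF vX X.mem_scale[OF bX]]] by simp
      have q2: "(ip_norm ipX (w - scX t (A b)))\<^sup>2 = (ip_norm ipX w)\<^sup>2 - 2 * Re (cnj t * ipX (A b) w) + (cmod t)\<^sup>2 * (ip_norm ipX (A b))\<^sup>2"
        using X.expand_sq[OF wX AbX, of t] X.ip_self[OF X.mem_diff[OF wX X.mem_scale[OF AbX]]] by simp
      show ?thesis unfolding Q_def e1 e2 q1 q2 K_def z_def v_def[symmetric] w_def[symmetric]
        by (simp add: algebra_simps)
    qed
    have "Q ainf \<le> Q (ainf + scX t b)" using Qd dle domA_add domA_scale ai b by metis
    then have ineq: "2 * Re (cnj t * z) \<le> (cmod t)\<^sup>2 * K" using Qt by simp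
    have re0: "Re (cnj t * z) = s * ((Re z)\<^sup>2 + (Im z)\<^sup>2)" unfolding t_def
      by (simp add: power2_eq_square algebra_simps)
    have re: "Re (cnj t * z) = s * r" unfolding r_def re0 cmod_power2 ..
    have ct: "(cmod t)\<^sup>2 = s\<^sup>2 * r" unfolding t_def r_def using s0 by (simp add: norm_mult power_mult_distrib)
    have "2 * (s * r) \<le> s\<^sup>2 * r * K" using ineq re ct by simp
    then have "s * (2 * r) \<le> s * ((s * K) * r)" by (simp add: power2_eq_square algebra_simps)
    then have "2 * r \<le> (s * K) * r" using mult_le_cancel_left_pos[OF s0] by blast
    also have "\<dots> \<le> 1 * r" using sK r0 by (intro mult_right_mono) auto
    also have "\<dots> = r" by simp
    finally have "r = 0" using r0 by simp
    then show ?thesis unfolding z_def r_def by simp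
  qed
  have negvX: "- v \<in> X" using X.mem_neg[OF vX] .
  have wD: "w \<in> Ds" and Aw: "As w = - v"
  proof -
    have "ipX (A b) w = ipX b (- v)" if b: "b\<in>domA" for b
    proof -
      have "ipX (A b) w = - ipX b v" using orth[OF b] by (metis add.commute eq_neg_iff_add_eq_0)
      then show ?thesis using X.ipR(5)[OF domA_X[OF b] vX] by simp
    qed
    then show "w \<in> Ds" "As w = - v" using adj_eq[OF wX negvX] by auto
  qed
  have "ipX (As f) w = ipX f (- v)" using sym[OF wD] Aw by simp
  moreover have "ipX (A ainf) w = ipX ainf (- v)" using adj_eq1[OF wD ai(1)] Aw by simp
  ultimately have "ipX (As f) w - ipX (A ainf) w = ipX f (- v) - ipX ainf (- v)" by simp
  then have "ipX w w = ipX v (- v)"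
    unfolding w_def v_def h0_def using X.ipR(8)[OF adj_X[OF f] A_X[OF ai(1)] wX] X.ipR(8)[OF fX domA_X[OF ai(1)] negvX]
    by (simp add: w_def[symmetric] v_def[symmetric] h0_def[symmetric])
  then have "ipX w w = - ipX v v" using X.ipR(5)[OF vX vX] by simp
  then have "(ip_norm ipX w)\<^sup>2 = - (ip_norm ipX v)\<^sup>2" using X.ip_self[OF vX] X.ip_self[OF wX]
    by (metis of_real_eq_iff of_real_minus)
  then have "ip_norm ipX v = 0" by (smt (verit) zero_le_power2 power_eq_0_iff)
  then have "v = 0" using X.norm_zero_iff[OF vX] by simp
  then show ?thesis using ai(1) v_def by simp
qed

end

context setting
begin

lemma ker_eq: "domA = {f \<in> Ds. G f = 0}"
proof
  show "domA \<subseteq> {f \<in> Ds. G f = 0}" using domA_Ds(1) domA_ker by blast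
  show "{f \<in> Ds. G f = 0} \<subseteq> domA"
  proof
    fix f assume "f \<in> {f \<in> Ds. G f = 0}"
    then have f: "f \<in> Ds" and G0: "G f = 0" by auto
    show "f \<in> domA"
    proof (rule vN[OF f])
      fix g assume g: "g \<in> Ds"
      have "ipX (As f) g - ipX f (As g) = 0"
        using R3[OF f g] G0 pR(10)[OF W_Hp[OF G_Hm[OF g]]] by simp
      then show "ipX (As f) g = ipX f (As g)" by simp
    qed
  qed
qed

lemma graph_eq: "graph domA A = {u \<in> graph Ds As. (\<lambda>(f, h). G f) u = 0}"
proof -
  have "graph domA A = {(f, As f) | f. f \<in> domA}" unfolding graph_def using domA_Ds(2) by force
  also have "\<dots> = {u \<in> graph Ds As. (\<lambda>(f, h). G f) u = 0}"
    unfolding graph_def using ker_eq by auto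
  finally show ?thesis .
qed

lemma closed_G: "closed_op (X \<times> X) (\<lambda>u v. gr_norm ipX (fst u - fst v) (snd u - snd v))
            (graph Ds As) Hmp (\<lambda>y z. ip_norm ipmp (y - z)) (\<lambda>(f, h). G f)"
  unfolding closed_op_def
proof (intro allI impI, elim conjE)
  fix s :: "nat \<Rightarrow> 'x \<times> 'x" and u :: "'x \<times> 'x" and y
  assume s: "\<forall>n. s n \<in> graph Ds As" and u: "u \<in> X \<times> X" and y: "y \<in> Hmp"
    and su: "(\<lambda>n. gr_norm ipX (fst (s n) - fst u) (snd (s n) - snd u)) \<longlonglongrightarrow> 0"
    and sy: "(\<lambda>n. ip_norm ipmp ((\<lambda>(f, h). G f) (s n) - y)) \<longlonglongrightarrow> 0"
  define fn where "fn n = fst (s n)" for n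
  have fn: "fn n \<in> Ds \<and> s n = (fn n, As (fn n))" for n
  proof -
    obtain f where "s n = (f, As f)" "f \<in> Ds" using s unfolding graph_def by blast
    then show ?thesis unfolding fn_def by simp
  qed
  then have fn: "fn n \<in> Ds" "s n = (fn n, As (fn n))" for n by auto
  obtain u1 u2 where uu: "u = (u1, u2)" "u1 \<in> X" "u2 \<in> X" using u by auto
  have fnX: "fn n \<in> X" for n using Ds_X[OF fn(1)] .
  have AfnX: "As (fn n) \<in> X" for n using adj_X[OF fn(1)] .
  have conv: "(\<lambda>n. ip_norm ipX (fn n - u1)) \<longlonglongrightarrow> 0 \<and> (\<lambda>n. ip_norm ipX (As (fn n) - u2)) \<longlonglongrightarrow> 0"
    by (rule gr_tendsto_D) (use su fn(2) uu X.mem_diff fnX AfnX in auto)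
  have lim_eq: "ipX (A b) u1 = ipX b u2" if b: "b \<in> domA" for b
  proof -
    have l1: "(\<lambda>n. ipX (A b) (fn n)) \<longlonglongrightarrow> ipX (A b) u1"
      by (rule X.ip_tendsto_right[OF A_X[OF b] uu(2) fnX conv[THEN conjunct1]])
    have l2: "(\<lambda>n. ipX b (As (fn n))) \<longlonglongrightarrow> ipX b u2"
      by (rule X.ip_tendsto_right[OF domA_X[OF b] uu(3) AfnX conv[THEN conjunct2]])
    have "(\<lambda>n. ipX (A b) (fn n)) = (\<lambda>n. ipX b (As (fn n)))" using adj_eq1[OF fn(1) b] by simp
    then show ?thesis using l1 l2 LIMSEQ_unique by metis
  qed
  have u1D: "u1 \<in> Ds" and Au1: "As u1 = u2" using adj_eq[OF uu(2) uu(3) lim_eq] by auto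
  have ug: "u \<in> graph Ds As" unfolding graph_def using uu(1) u1D Au1 by auto
  have Gfn: "(\<lambda>n. ip_norm ipmp (G (fn n) - y)) \<longlonglongrightarrow> 0" using sy fn(2) by simp
  have "G u1 - y = 0"
  proof (rule nondeg1)
    show "G u1 - y \<in> Hmp" using Hm.mem_diff[OF G_Hm[OF u1D] y] .
    fix k assume k: "k \<in> Hpm"
    obtain g where g: "g \<in> Ds" "k = W (G g)" using Hp_surj[OF k] by blast
    have gX: "g \<in> X" and AgX: "As g \<in> X" using Ds_X adj_X g by auto
    have l1: "(\<lambda>n. ipX (As (fn n)) g - ipX (fn n) (As g)) \<longlonglongrightarrow> ipX u2 g - ipX u1 (As g)"
      by (intro tendsto_diff X.ip_tendsto_left[OF gX uu(3) AfnX conv[THEN conjunct2]]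
          X.ip_tendsto_left[OF AgX uu(2) fnX conv[THEN conjunct1]])
    have b: "\<forall>n. norm (p (G (fn n)) k - p y k) \<le> Cp * ip_norm ippm k * ip_norm ipmp (G (fn n) - y)"
    proof
      fix n
      have "p (G (fn n)) k - p y k = p (G (fn n) - y) k" using pR(8)[OF G_Hm[OF fn(1)] y k] by simp
      then show "norm (p (G (fn n)) k - p y k) \<le> Cp * ip_norm ippm k * ip_norm ipmp (G (fn n) - y)"
        using Cp(2)[OF Hm.mem_diff[OF G_Hm[OF fn(1)] y] k] by (simp add: algebra_simps)
    qed
    have "(\<lambda>n. p (G (fn n)) k - p y k) \<longlonglongrightarrow> 0"
      by (rule Lim_null_comparison[OF always_eventually[OF b] tendsto_mult_right_zero[OF Gfn]])
    then have l2: "(\<lambda>n. p (G (fn n)) k) \<longlonglongrightarrow> p y k" by (rule LIM_zero_cancel)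
    have "(\<lambda>n. ipX (As (fn n)) g - ipX (fn n) (As g)) = (\<lambda>n. p (G (fn n)) k)"
      using R3[OF fn(1) g(1)] g(2) by simp
    then have "ipX u2 g - ipX u1 (As g) = p y k" using l1 l2 LIMSEQ_unique by metis
    moreover have "ipX u2 g - ipX u1 (As g) = p (G u1) k" using R3[OF u1D g(1)] Au1 g(2) by simp
    ultimately show "p (G u1 - y) k = 0" using pR(8)[OF G_Hm[OF u1D] y k] by simp
  qed
  then show "u \<in> graph Ds As \<and> (\<lambda>(f, h). G f) u = y" using uu(1) ug by simp
qed

definition grn where "grn f = gr_norm ipX f (As f)"

lemma grn_ge: "f \<in> Ds \<Longrightarrow> ip_norm ipX f \<le> grn f \<and> ip_norm ipX (As f) \<le> grn f \<and> grn f \<ge> 0"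
  unfolding grn_def gr_norm_def by simp

lemma pointwise: assumes k: "k \<in> Hpm" shows "\<exists>n::nat. \<forall>f\<in>Ds. cmod (p (G f) k) \<le> real n * grn f"
proof -
  obtain g where g: "g \<in> Ds" "k = W (G g)" using Hp_surj[OF k] by blast
  have gX: "g \<in> X" and AgX: "As g \<in> X" using Ds_X adj_X g by auto
  define n where "n = nat \<lceil>ip_norm ipX g + ip_norm ipX (As g)\<rceil>"
  have n: "ip_norm ipX g + ip_norm ipX (As g) \<le> real n" unfolding n_def by (rule real_nat_ceiling_ge)
  have "cmod (p (G f) k) \<le> real n * grn f" if f: "f \<in> Ds" for f
  proof -
    have fX: "f \<in> X" and AfX: "As f \<in> X" using Ds_X adj_X f by auto
    have "p (G f) k = ipX (As f) g - ipX f (As g)" using R3[OF f g(1)] g(2) by simp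
    then have "cmod (p (G f) k) \<le> cmod (ipX (As f) g) + cmod (ipX f (As g))" by (simp add: norm_triangle_ineq4)
    also have "\<dots> \<le> ip_norm ipX (As f) * ip_norm ipX g + ip_norm ipX f * ip_norm ipX (As g)"
      using X.cauchy_schwarz[OF AfX gX] X.cauchy_schwarz[OF fX AgX] by simp
    also have "\<dots> \<le> grn f * ip_norm ipX g + grn f * ip_norm ipX (As g)"
      using grn_ge[OF f] X.norm_nonneg[OF gX] X.norm_nonneg[OF AgX]
      by (intro add_mono mult_right_mono) auto
    also have "\<dots> = grn f * (ip_norm ipX g + ip_norm ipX (As g))" by (simp add: algebra_simps)
    also have "\<dots> \<le> grn f * real n" using n grn_ge[OF f] by (intro mult_left_mono) auto
    finally show ?thesis by (simp add: mult.commute)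
  qed
  then show ?thesis by blast
qed

definition dd where "dd k l = (if k \<in> Hpm \<and> l \<in> Hpm then ip_norm ippm (k - l) else 0)"

lemma dd_metric: "Metric_space Hpm dd"
proof
  show "0 \<le> dd x y" for x y unfolding dd_def using Hp.norm_nonneg Hp.mem_diff by auto
  show "dd x y = dd y x" for x y unfolding dd_def using Hp.norm_commute by auto
  show "x \<in> Hpm \<Longrightarrow> y \<in> Hpm \<Longrightarrow> (dd x y = 0) = (x = y)" for x y
    unfolding dd_def using Hp.norm_zero_iff[OF Hp.mem_diff[of x y]] by auto
  show "x \<in> Hpm \<Longrightarrow> y \<in> Hpm \<Longrightarrow> z \<in> Hpm \<Longrightarrow> dd x z \<le> dd x y + dd y z" for x y z
    unfolding dd_def using Hp.triangle_diff by auto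
qed

lemma uniform: "\<exists>M\<ge>0. \<forall>f\<in>Ds. \<forall>k\<in>Hpm. cmod (p (G f) k) \<le> M * grn f * ip_norm ippm k"
proof -
  interpret MS: Metric_space Hpm dd by (rule dd_metric)
  define E where "E n = {k \<in> Hpm. \<forall>f\<in>Ds. cmod (p (G f) k) \<le> real n * grn f}" for n :: nat
  have comp: "MS.mcomplete"
    unfolding MS.mcomplete_def MS.MCauchy_def
  proof (intro allI impI, elim conjE)
    fix \<sigma> :: "nat \<Rightarrow> 'h"
    assume r: "range \<sigma> \<subseteq> Hpm" and c: "\<forall>\<epsilon>>0. \<exists>N. \<forall>n n'. N \<le> n \<longrightarrow> N \<le> n' \<longrightarrow> dd (\<sigma> n) (\<sigma> n') < \<epsilon>"
    have r': "\<forall>n. \<sigma> n \<in> Hpm" using r by auto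
    have c': "\<forall>e>0. \<exists>N. \<forall>m\<ge>N. \<forall>n\<ge>N. ip_norm ippm (\<sigma> m - \<sigma> n) < e"
      using c r' unfolding dd_def by simp
    obtain l where l: "l \<in> Hpm" "(\<lambda>n. ip_norm ippm (\<sigma> n - l)) \<longlonglongrightarrow> 0" using Hp.complete[OF r' c'] by blast
    have "limitin MS.mtopology \<sigma> l sequentially"
      unfolding MS.limitin_metric
    proof (intro conjI allI impI)
      show "l \<in> Hpm" by (rule l(1))
      fix e :: real assume e: "e > 0"
      have "\<forall>\<^sub>F n in sequentially. ip_norm ippm (\<sigma> n - l) < e" using order_tendstoD(2)[OF l(2) e] .
      then show "\<forall>\<^sub>F n in sequentially. \<sigma> n \<in> Hpm \<and> dd (\<sigma> n) l < e"
        by (rule eventually_mono) (use r' l(1) in \<open>simp add: dd_def\<close>)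
    qed
    then show "\<exists>x. limitin MS.mtopology \<sigma> x sequentially" by blast
  qed
  have closed: "closedin MS.mtopology (E n)" for n
    unfolding MS.metric_closedin_iff_sequentially_closed
  proof (intro conjI allI impI)
    show "E n \<subseteq> Hpm" unfolding E_def by blast
    fix \<sigma> l assume rl: "range \<sigma> \<subseteq> E n \<and> limitin MS.mtopology \<sigma> l sequentially"
    have r: "range \<sigma> \<subseteq> E n" and lim: "limitin MS.mtopology \<sigma> l sequentially" using rl by auto
    have l: "l \<in> Hpm" using lim unfolding MS.limitin_metric by blast
    have ev: "\<forall>\<^sub>F m in sequentially. \<sigma> m \<in> Hpm \<and> dd (\<sigma> m) l < e" if "e > 0" for e
      using lim that unfolding MS.limitin_metric by blast
    have sE: "\<sigma> m \<in> Hpm" "\<forall>f\<in>Ds. cmod (p (G f) (\<sigma> m)) \<le> real n * grn f" for m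
      using r unfolding E_def by auto
    have "cmod (p (G f) l) \<le> real n * grn f" if f: "f \<in> Ds" for f
    proof (rule field_le_epsilon)
      fix e :: real assume e: "e > 0"
      define C1 where "C1 = Cp * ip_norm ipmp (G f) + 1"
      have C1: "C1 > 0" unfolding C1_def using Cp(1) Hm.norm_nonneg[OF G_Hm[OF f]] by (simp add: add_nonneg_pos)
      obtain m where m: "dd (\<sigma> m) l < e / C1"
        using eventually_happens'[OF sequentially_bot ev[of "e / C1"]] C1 e by auto
      have dm: "ip_norm ippm (l - \<sigma> m) < e / C1"
        using m l sE(1)[of m] Hp.norm_commute[OF l sE(1)[of m]] unfolding dd_def by simp
      have "p (G f) l = p (G f) (\<sigma> m) + p (G f) (l - \<sigma> m)" using pR(7)[OF G_Hm[OF f] l sE(1)[of m]] by simp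
      then have "cmod (p (G f) l) \<le> cmod (p (G f) (\<sigma> m)) + cmod (p (G f) (l - \<sigma> m))" by (simp add: norm_triangle_ineq)
      also have "cmod (p (G f) (l - \<sigma> m)) \<le> Cp * ip_norm ipmp (G f) * ip_norm ippm (l - \<sigma> m)"
        using Cp(2)[OF G_Hm[OF f] Hp.mem_diff[OF l sE(1)[of m]]] .
      also have "\<dots> \<le> C1 * (e / C1)"
        using dm Cp(1) Hm.norm_nonneg[OF G_Hm[OF f]] Hp.norm_nonneg[OF Hp.mem_diff[OF l sE(1)[of m]]]
        unfolding C1_def by (intro mult_mono) auto
      also have "\<dots> = e" using C1 by simp
      finally show "cmod (p (G f) l) \<le> real n * grn f + e" using sE(2)[of m] f by fastforce
    qed
    then show "l \<in> E n" unfolding E_def using l by blast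
  qed
  have union: "\<Union> (range E) = Hpm"
  proof
    show "\<Union> (range E) \<subseteq> Hpm" unfolding E_def by blast
    show "Hpm \<subseteq> \<Union> (range E)" unfolding E_def using pointwise by blast
  qed
  have "\<exists>n. MS.mtopology interior_of (E n) \<noteq> {}"
  proof (rule ccontr)
    assume "\<not> (\<exists>n. MS.mtopology interior_of (E n) \<noteq> {})"
    then have all: "\<And>T. T \<in> range E \<Longrightarrow> closedin MS.mtopology T \<and> MS.mtopology interior_of T = {}"
      using closed by auto
    have "MS.mtopology interior_of \<Union> (range E) = {}"
      by (rule MS.metric_Baire_category_alt[OF comp _ all]) auto
    then have "Hpm = {}" unfolding union using MS.topspace_mtopology interior_of_topspace by metis
    then show False using Hp.mem_zero by blast
  qed
  then obtain n k0 where k0: "k0 \<in> MS.mtopology interior_of (E n)" by blast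
  then obtain T where T: "openin MS.mtopology T" "k0 \<in> T" "T \<subseteq> E n" unfolding interior_of_def by blast
  obtain r where r: "r > 0" "MS.mball k0 r \<subseteq> T" using T(1,2) unfolding MS.openin_mtopology by blast
  have k0H: "k0 \<in> Hpm" using T(2,3) unfolding E_def by blast
  have ball: "y \<in> E n" if "y \<in> Hpm" "ip_norm ippm (k0 - y) < r" for y
  proof -
    have "y \<in> MS.mball k0 r" using that k0H by (simp add: dd_def)
    then show ?thesis using r(2) T(3) by blast
  qed
  have k0E: "k0 \<in> E n" using T by blast
  define M where "M = 4 * real n / r"
  have M0: "M \<ge> 0" unfolding M_def using r by simp
  have "cmod (p (G f) k) \<le> M * grn f * ip_norm ippm k" if f: "f \<in> Ds" and k: "k \<in> Hpm" for f k
  proof (cases "k = 0")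
    case True then show ?thesis using pR(9)[OF G_Hm[OF f]] by simp
  next
    case False
    have nk: "ip_norm ippm k > 0" using Hp.norm_zero_iff[OF k] Hp.norm_nonneg[OF k] False by linarith
    define t where "t = r / (2 * ip_norm ippm k)"
    have t0: "t > 0" unfolding t_def using r nk by simp
    define k' where "k' = sc (complex_of_real t) k"
    have k'H: "k' \<in> Hpm" unfolding k'_def using Hp.mem_scale[OF k] .
    have "ip_norm ippm k' = cmod (complex_of_real t) * ip_norm ippm k" unfolding k'_def by (rule Hp.norm_scale[OF k])
    also have "\<dots> = t * ip_norm ippm k" using t0 by simp
    also have "\<dots> = r / 2" unfolding t_def using nk by simp
    finally have nk': "ip_norm ippm k' = r / 2" .
    have yH: "k0 + k' \<in> Hpm" using Hp.mem_add[OF k0H k'H] .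
    have "ip_norm ippm (k0 - (k0 + k')) = r / 2" using Hp.norm_neg[OF k'H] nk' by simp
    then have yE: "k0 + k' \<in> E n" using ball[OF yH] r by simp
    have b1: "cmod (p (G f) (k0 + k')) \<le> real n * grn f" using yE f unfolding E_def by blast
    have b2: "cmod (p (G f) k0) \<le> real n * grn f" using k0E f unfolding E_def by blast
    have "p (G f) k' = p (G f) (k0 + k') - p (G f) k0" using pR(1)[OF G_Hm[OF f] k0H k'H] by simp
    then have "cmod (p (G f) k') \<le> 2 * real n * grn f" using b1 b2 norm_triangle_ineq4[of "p (G f) (k0 + k')" "p (G f) k0"] by simp
    moreover have "cmod (p (G f) k') = t * cmod (p (G f) k)" unfolding k'_def using pR(2)[OF G_Hm[OF f] k] t0 by (simp add: norm_mult)
    ultimately have "t * cmod (p (G f) k) \<le> 2 * real n * grn f" by simp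
    then have "cmod (p (G f) k) \<le> 2 * real n * grn f / t" using t0 by (simp add: field_simps)
    also have "\<dots> = M * grn f * ip_norm ippm k" unfolding t_def M_def using r nk by (simp add: field_simps)
    finally show ?thesis .
  qed
  then show ?thesis using M0 by blast
qed

lemma bounded_G: "bounded_op (graph Ds As) (\<lambda>u. gr_norm ipX (fst u) (snd u)) (ip_norm ipmp) (\<lambda>(f, h). G f)"
proof -
  obtain M where M: "M \<ge> 0" "\<And>f k. f\<in>Ds \<Longrightarrow> k\<in>Hpm \<Longrightarrow> cmod (p (G f) k) \<le> M * grn f * ip_norm ippm k"
    using uniform by blast
  have "ip_norm ipmp ((\<lambda>(f, h). G f) u) \<le> M * gr_norm ipX (fst u) (snd u)" if u: "u \<in> graph Ds As" for u
  proof -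
    obtain f where f: "f \<in> Ds" "u = (f, As f)" using u unfolding graph_def by blast
    have "ip_norm ipmp (G f) \<le> M * grn f"
      by (rule dual_mp[OF G_Hm[OF f(1)]]) (use M grn_ge[OF f(1)] f(1) in auto)
    then show ?thesis using f(2) unfolding grn_def by simp
  qed
  then show ?thesis unfolding bounded_op_def by blast
qed

end

theorem proposition5p6:
  fixes scX :: "complex \<Rightarrow> 'x::ab_group_add \<Rightarrow> 'x"
    and X domA :: "'x set" and ipX :: "'x \<Rightarrow> 'x \<Rightarrow> complex" and A :: "'x \<Rightarrow> 'x"
    and sc :: "complex \<Rightarrow> 'h::ab_group_add \<Rightarrow> 'h"
    and H Hmp Hpm :: "'h set" and ipH ipmp ippm p :: "'h \<Rightarrow> 'h \<Rightarrow> complex"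
    and G :: "'x \<Rightarrow> 'h" and W :: "'h \<Rightarrow> 'h"
  assumes "vector_space scX" and "vector_space sc"
    and "hilbert_space scX X ipX"
    and "cdd_symmetric scX X ipX domA A"
    and "mixed_duality sc H ipH Hmp ipmp Hpm ippm"
    and "is_H_pairing sc H ipH Hmp ipmp Hpm ippm p"
    and "reduction_tuple scX X ipX domA A sc Hmp ipmp Hpm ippm p G W"
  shows
    "let Dstar = adj_dom X ipX domA A; Astar = adj X ipX domA A;
         G' = (\<lambda>(f, h). G f)
     in closed_op (X \<times> X) (\<lambda>u v. gr_norm ipX (fst u - fst v) (snd u - snd v))
            (graph Dstar Astar) Hmp (\<lambda>y z. ip_norm ipmp (y - z)) G'
      \<and> bounded_op (graph Dstar Astar) (\<lambda>u. gr_norm ipX (fst u) (snd u)) (ip_norm ipmp) G'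
      \<and> (\<forall>c. cmod c = 1 \<longrightarrow>
           reduction_tuple scX X ipX domA A sc Hpm ippm Hmp ipmp (\<lambda>a b. cnj (p b a))
             (\<lambda>f. sc c (W (G f))) (\<lambda>x. - inv_into Hmp W x))
      \<and> graph domA A = {u \<in> graph Dstar Astar. G' u = 0}
      \<and> domA = {f \<in> Dstar. G f = 0}
      \<and> (\<forall>x\<in>Hmp. sharp Hmp Hpm p W x = - W x)"
proof -
  interpret setting scX X domA ipX A sc H Hmp Hpm ipH ipmp ippm p G W
    by (intro setting.intro assms)
  show ?thesis
    unfolding Let_def
  proof (intro conjI allI impI ballI)
    show "closed_op (X \<times> X) (\<lambda>u v. gr_norm ipX (fst u - fst v) (snd u - snd v))
            (graph Ds As) Hmp (\<lambda>y z. ip_norm ipmp (y - z)) (\<lambda>(f, h). G f)" by (rule closed_G)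
    show "bounded_op (graph Ds As) (\<lambda>u. gr_norm ipX (fst u) (snd u)) (ip_norm ipmp) (\<lambda>(f, h). G f)"
      by (rule bounded_G)
    fix c :: complex assume "cmod c = 1"
    then show "reduction_tuple scX X ipX domA A sc Hpm ippm Hmp ipmp (\<lambda>a b. cnj (p b a))
             (\<lambda>f. sc c (W (G f))) (\<lambda>x. - inv_into Hmp W x)" by (rule part2)
  next
    show "graph domA A = {u \<in> graph Ds As. (\<lambda>(f, h). G f) u = 0}" by (rule graph_eq)
    show "domA = {f \<in> Ds. G f = 0}" by (rule ker_eq)
    fix x assume "x \<in> Hmp"
    then show "sharp Hmp Hpm p W x = - W x" by (rule sharp_eq)
  qed
qed

end
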